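(* Let $(x_{ij})$ lie in the polytope of the second level Poisson Matching LP, and let $f:[0,1]^2\to\mathbb{R}$ be normalized and DR submodular. Fix $j_1\ne j_2\in J$, with $x_{j}=\sum_ix_{ij}$. Let $\lambda_1^*,\lambda_2^*\ge0$ be the unique solution of \[ x_{j_1}=1-P_0(\lambda_1^* ),\qquad x_{j_2}=\big(2-P_0(\lambda_2^* )-P_1(\lambda_2^* )\big)-\big(1-P_0(\min\{\lambda_1^*,\lambda_2^*\})\big). \] With $\rho_{ij}=x_{ij}/\lambda_i$, the following holds. If $\lambda_1^*\le\lambda_2^*$, then \[ \sum_{i\in I}\lambda_i f(\rho_{ij_1},\rho_{ij_1}+\rho_{ij_2})\ge\int_0^{\lambda_1^*}f(P_0(\lambda),P_1(\lambda))\,d\lambda+\int_{\lambda_1^*}^{\lambda_2^*}f(0,P_1(\lambda))\,d\lambda . \] If $\lambda_1^*>\lambda_2^*$, then \[ \sum_{i\in I}\lambda_i f(\rho_{ij_1},\rho_{ij_1}+\rho_{ij_2})\ge\int_0^{\lambda_2^*}f(P_0(\lambda),P_1(\lambda))\,d\lambda+\int_{\lambda_2^*}^{\lambda_1^*}f(P_0(\lambda),P_0(\lambda))\,d\lambda . \]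
   Context: $I$ is a finite set of online types with rates $\lambda_i>0$, $J$ a finite set of offline vertices, and $E\subseteq I\times J$ the edges, with $x_{ij}=0$ for non-edges. $\lambda_S=\sum_{i\in S}\lambda_i$ and $P_k(\lambda)=e^{-\lambda}\sum_{m=0}^k\lambda^m/m!$. The polytope of the second level Poisson Matching LP is the set of $x\ge0$ with: - $\sum_jx_{ij}\le\lambda_i$ for all $i$; - $\sum_{i\in S}x_{ij}\le1-P_0(\lambda_S)$ for all $S\subseteq I$ and $j\in J$; - $\sum_{i\in S}(x_{ij}+x_{ij'})\le(1-P_0(\lambda_S))+(1-P_1(\lambda_S))$ for all $S\subseteq I$ and distinct $j,j'\in J$. A smooth $f:[0,1]^2\to\mathbb{R}$ is DR submodular if all entries of its Hessian are $\le0$ everywhere. It is normalized if $f(0,0)=0$. *)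

theory Defs
  imports "HOL-Analysis.Analysis"
begin

definition poissonP :: "nat \<Rightarrow> real \<Rightarrow> real" where
  "poissonP k l = exp (- l) * (\<Sum>m\<le>k. l ^ m / fact m)"

definition in_PM2_polytope ::
  "'i set \<Rightarrow> 'j set \<Rightarrow> ('i \<times> 'j) set \<Rightarrow> ('i \<Rightarrow> real) \<Rightarrow> ('i \<Rightarrow> 'j \<Rightarrow> real) \<Rightarrow> bool" where
  "in_PM2_polytope I J E lam x \<longleftrightarrow>
     (\<forall>i\<in>I. \<forall>j\<in>J. x i j \<ge> 0) \<and>
     (\<forall>i\<in>I. \<forall>j\<in>J. (i, j) \<notin> E \<longrightarrow> x i j = 0) \<and>
     (\<forall>i\<in>I. (\<Sum>j\<in>J. x i j) \<le> lam i) \<and>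
     (\<forall>S\<subseteq>I. \<forall>j\<in>J. (\<Sum>i\<in>S. x i j) \<le> 1 - poissonP 0 (\<Sum>i\<in>S. lam i)) \<and>
     (\<forall>S\<subseteq>I. \<forall>j\<in>J. \<forall>j'\<in>J. j \<noteq> j' \<longrightarrow>
        (\<Sum>i\<in>S. x i j + x i j') \<le>
          (1 - poissonP 0 (\<Sum>i\<in>S. lam i)) + (1 - poissonP 1 (\<Sum>i\<in>S. lam i)))"

text \<open>Smooth (here: C^2 on the closed unit square, derivatives taken within the square)
  DR-submodular function: all entries of the Hessian are nonpositive everywhere on the square.\<close>
definition dr_submodular :: "(real \<times> real \<Rightarrow> real) \<Rightarrow> bool" where
  "dr_submodular f \<longleftrightarrow>
    (\<exists>f1 f2 f11 f12 f21 f22 :: real \<times> real \<Rightarrow> real.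
      (\<forall>p\<in>{0..1::real} \<times> {0..1::real}.
         (f has_derivative (\<lambda>(h, k). f1 p * h + f2 p * k)) (at p within {0..1} \<times> {0..1}) \<and>
         (f1 has_derivative (\<lambda>(h, k). f11 p * h + f12 p * k)) (at p within {0..1} \<times> {0..1}) \<and>
         (f2 has_derivative (\<lambda>(h, k). f21 p * h + f22 p * k)) (at p within {0..1} \<times> {0..1}) \<and>
         f11 p \<le> 0 \<and> f12 p \<le> 0 \<and> f21 p \<le> 0 \<and> f22 p \<le> 0) \<and>
      continuous_on ({0..1} \<times> {0..1}) f11 \<and> continuous_on ({0..1} \<times> {0..1}) f12 \<and>
      continuous_on ({0..1} \<times> {0..1}) f21 \<and> continuous_on ({0..1} \<times> {0..1}) f22)"

definition normalized :: "(real \<times> real \<Rightarrow> real) \<Rightarrow> bool" where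
  "normalized f \<longleftrightarrow> f (0, 0) = 0"

end

theory Submission
  imports Defs
begin

definition sq :: "(real \<times> real) set" where "sq = {0..1} \<times> {0..1}"

locale drf =
  fixes f f1 f2 f11 f12 f21 f22 :: "real \<times> real \<Rightarrow> real"
  assumes df: "\<And>p. p \<in> sq \<Longrightarrow> (f has_derivative (\<lambda>(h, k). f1 p * h + f2 p * k)) (at p within sq)"
  and df1: "\<And>p. p \<in> sq \<Longrightarrow> (f1 has_derivative (\<lambda>(h, k). f11 p * h + f12 p * k)) (at p within sq)"
  and df2: "\<And>p. p \<in> sq \<Longrightarrow> (f2 has_derivative (\<lambda>(h, k). f21 p * h + f22 p * k)) (at p within sq)"
  and sgn: "\<And>p. p \<in> sq \<Longrightarrow> f11 p \<le> 0 \<and> f12 p \<le> 0 \<and> f21 p \<le> 0 \<and> f22 p \<le> 0"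

lemma line_deriv:
  fixes F F1 F2 :: "real \<times> real \<Rightarrow> real"
  assumes D: "\<And>p. p\<in>sq \<Longrightarrow> (F has_derivative (\<lambda>(h,k). F1 p* h + F2 p* k)) (at p within sq)"
  and path: "\<And>s. s\<in>T \<Longrightarrow> (a0+m1* s, b0+m2* s) \<in> sq" and s: "s \<in> T"
  shows "((\<lambda>s. F (a0+m1* s, b0+m2* s)) has_real_derivative
      (m1 * F1 (a0+m1* s, b0+m2* s) + m2 * F2 (a0+m1* s, b0+m2* s))) (at s within T)"
proof -
  let ?P = "\<lambda>s. (a0+m1* s, b0+m2* s)"
  have dP: "(?P has_derivative (\<lambda>t. (m1* t, m2* t))) (at s within T)"
    by (auto intro!: derivative_eq_intros)
  have dF: "(F has_derivative (\<lambda>(h,k). F1 (?P s)* h + F2 (?P s)* k)) (at (?P s) within ?P ` T)"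
    using D[OF path[OF s]] by (rule has_derivative_subset) (use path in auto)
  have "((F \<circ> ?P) has_derivative ((\<lambda>(h,k). F1 (?P s)* h + F2 (?P s)* k) \<circ> (\<lambda>t. (m1* t, m2* t)))) (at s within T)"
    by (rule diff_chain_within[OF dP dF])
  then show ?thesis
    unfolding has_field_derivative_def o_def
    by (rule has_derivative_eq_rhs) (auto simp: algebra_simps)
qed

lemma line_ftc:
  fixes F F1 F2 :: "real \<times> real \<Rightarrow> real"
  assumes D: "\<And>p. p\<in>sq \<Longrightarrow> (F has_derivative (\<lambda>(h,k). F1 p* h + F2 p* k)) (at p within sq)"
  and path: "\<And>s. s\<in>{u..v} \<Longrightarrow> (a0+m1* s, b0+m2* s) \<in> sq" and uv: "u \<le> v"
  shows "((\<lambda>s. m1 * F1 (a0+m1* s, b0+m2* s) + m2 * F2 (a0+m1* s, b0+m2* s)) has_integral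
          (F (a0+m1* v, b0+m2* v) - F (a0+m1* u, b0+m2* u))) {u..v}"
proof (rule fundamental_theorem_of_calculus[OF uv, of "\<lambda>s. F (a0 + m1 * s, b0 + m2 * s)"])
  fix s assume s: "s \<in> {u..v}"
  show "((\<lambda>s. F (a0 + m1 * s, b0 + m2 * s)) has_vector_derivative
          m1 * F1 (a0 + m1 * s, b0 + m2 * s) + m2 * F2 (a0 + m1 * s, b0 + m2 * s)) (at s within {u..v})"
    using line_deriv[OF D path s] by (simp add: has_real_derivative_iff_has_vector_derivative)
qed

lemma seg_in_sq:
  assumes "(a,b) \<in> sq" "(c,d) \<in> sq" "s \<in> {0..1}"
  shows "(a + (c-a) * s, b + (d-b) * s) \<in> sq"
proof -
  have "a + (c-a) * s = (1-s)*a + s*c" "b + (d-b) * s = (1-s)*b + s*d" by (auto simp: algebra_simps)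
  moreover have "0 \<le> (1-s)*a + s*c" "(1-s)*a + s*c \<le> 1" "0 \<le> (1-s)*b + s*d" "(1-s)*b + s*d \<le> 1"
    using assms unfolding sq_def
    by (auto intro!: convex_bound_le add_nonneg_nonneg mult_nonneg_nonneg)
  ultimately show ?thesis unfolding sq_def by auto
qed

lemma has_integral_nonpos_real:
  fixes g :: "real \<Rightarrow> real"
  assumes "(g has_integral I) S" "\<And>x. x \<in> S \<Longrightarrow> g x \<le> 0"
  shows "I \<le> 0"
  using has_integral_le[OF assms(1) has_integral_0[of S]] assms(2) by auto

context drf
begin

lemma f1_anti:
  assumes "(a,b) \<in> sq" "(c,d) \<in> sq" "a \<le> c" "b \<le> d"
  shows "f1 (c,d) \<le> f1 (a,b)"
proof -
  have "((\<lambda>s. (c-a) * f11 (a + (c-a) * s, b + (d-b) * s) + (d-b) * f12 (a + (c-a) * s, b + (d-b) * s))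
     has_integral (f1 (a + (c-a) * 1, b + (d-b) * 1) - f1 (a + (c-a) * 0, b + (d-b) * 0))) {0..1}"
    by (rule line_ftc[OF df1]) (use seg_in_sq[OF assms(1,2)] in auto)
  then have "f1 (a + (c-a) * 1, b + (d-b) * 1) - f1 (a + (c-a) * 0, b + (d-b) * 0) \<le> 0"
    apply (rule has_integral_nonpos_real)
    using sgn[OF seg_in_sq[OF assms(1,2)]] assms(3,4)
    by (auto intro!: add_nonpos_nonpos mult_nonneg_nonpos)
  then show ?thesis by simp
qed

lemma f2_anti:
  assumes "(a,b) \<in> sq" "(c,d) \<in> sq" "a \<le> c" "b \<le> d"
  shows "f2 (c,d) \<le> f2 (a,b)"
proof -
  have "((\<lambda>s. (c-a) * f21 (a + (c-a) * s, b + (d-b) * s) + (d-b) * f22 (a + (c-a) * s, b + (d-b) * s))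
     has_integral (f2 (a + (c-a) * 1, b + (d-b) * 1) - f2 (a + (c-a) * 0, b + (d-b) * 0))) {0..1}"
    by (rule line_ftc[OF df2]) (use seg_in_sq[OF assms(1,2)] in auto)
  then have "f2 (a + (c-a) * 1, b + (d-b) * 1) - f2 (a + (c-a) * 0, b + (d-b) * 0) \<le> 0"
    apply (rule has_integral_nonpos_real)
    using sgn[OF seg_in_sq[OF assms(1,2)]] assms(3,4)
    by (auto intro!: add_nonpos_nonpos mult_nonneg_nonpos)
  then show ?thesis by simp
qed

lemma cont_f: "continuous_on sq f"
  unfolding continuous_on_eq_continuous_within
  using df has_derivative_continuous by blast
lemma cont_f1: "continuous_on sq f1"
  unfolding continuous_on_eq_continuous_within
  using df1 has_derivative_continuous by blast
lemma cont_f2: "continuous_on sq f2"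
  unfolding continuous_on_eq_continuous_within
  using df2 has_derivative_continuous by blast

lemma ftc_vert:
  assumes "a \<in> {0..1}" "0 \<le> u" "u \<le> v" "v \<le> 1"
  shows "((\<lambda>s. f2 (a, s)) has_integral (f (a, v) - f (a, u))) {u..v}"
  using line_ftc[OF df, of u v a 0 0 1] assms by (auto simp: sq_def)

lemma ftc_horiz:
  assumes "b \<in> {0..1}" "0 \<le> u" "u \<le> v" "v \<le> 1"
  shows "((\<lambda>s. f1 (s, b)) has_integral (f (v, b) - f (u, b))) {u..v}"
  using line_ftc[OF df, of u v 0 1 b 0] assms by (auto simp: sq_def)

lemma ftc_diag:
  assumes "0 \<le> u" "u \<le> v" "v \<le> 1"
  shows "((\<lambda>s. f1 (s, s) + f2 (s, s)) has_integral (f (v, v) - f (u, u))) {u..v}"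
  using line_ftc[OF df, of u v 0 1 0 1] assms by (auto simp: sq_def)

end


lemma int_affine:
  fixes g :: "real \<Rightarrow> real"
  assumes "g integrable_on {a..b}"
  shows "(\<lambda>x. p + q * (g x - r)) integrable_on {a..b}"
proof -
  have "(\<lambda>x. q *\<^sub>R g x) integrable_on {a..b}" using integrable_cmul[OF assms] .
  then have "(\<lambda>x. (p - q * r) + q * g x) integrable_on {a..b}"
    by (intro Henstock_Kurzweil_Integration.integrable_add integrable_const_ivl) auto
  then show ?thesis by (simp add: algebra_simps)
qed

lemma oneD_step:
  fixes lam a :: "'i \<Rightarrow> real" and \<phi> c \<gamma> :: "real \<Rightarrow> real"
  assumes fin: "finite I" and pos: "\<forall>i\<in>I. lam i > 0" and a01: "\<forall>i\<in>I. a i \<in> {0..1}"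
  and sd: "\<forall>x\<in>{0..1}. \<forall>y\<in>{0..1}. \<phi> y \<le> \<phi> x + c x * (y - x)"
  and ca: "\<forall>x\<in>{0..1}. \<forall>y\<in>{0..1}. x \<le> y \<longrightarrow> c y \<le> c x"
  and g01: "\<forall>t\<in>{0..sum lam I}. \<gamma> t \<in> {0..1}"
  and i1: "(\<lambda>t. \<phi> (\<gamma> t)) integrable_on {0..sum lam I}" and i2: "\<gamma> integrable_on {0..sum lam I}"
  and sub: "\<forall>S\<subseteq>I. (\<Sum>i\<in>S. lam i * a i) \<le> integral {0..sum lam S} \<gamma>"
  and S: "S \<subseteq> I"
  shows "\<forall>m\<in>{0..1}. (\<forall>i\<in>S. m \<le> a i) \<longrightarrow>
     (\<Sum>i\<in>S. lam i * \<phi> (a i)) \<ge> integral {0..sum lam S} (\<lambda>t. \<phi> (\<gamma> t))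
        - c m * (integral {0..sum lam S} \<gamma> - (\<Sum>i\<in>S. lam i * a i))"
  using finite_subset[OF S fin]
proof (induction S rule: finite_remove_induct)
  case empty
  then show ?case by simp
next
  case (remove A)
  have finA: "finite A" using remove.hyps(1) .
  have "Min (a ` A) \<in> a ` A" using finA remove.hyps(2) by (intro Min_in) auto
  then obtain j where j: "j \<in> A" "a j = Min (a ` A)" by (metis imageE)
  have jmin: "\<forall>i\<in>A. a j \<le> a i" using j finA by auto
  let ?A' = "A - {j}"
  have AI: "A \<subseteq> I" using remove.hyps(3) S by auto
  have lampos: "\<forall>i\<in>I. 0 \<le> lam i" using pos by auto
  define L' where "L' = sum lam ?A'"
  define L where "L = sum lam A"
  have LL: "L = L' + lam j" unfolding L_def L'_def using finA j(1) by (simp add: sum.remove)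
  have L'0: "0 \<le> L'" unfolding L'_def using AI lampos by (auto intro!: sum_nonneg)
  have lj: "0 < lam j" using pos AI j by auto
  have LI: "L \<le> sum lam I" unfolding L_def using AI lampos fin by (intro sum_mono2) auto
  have i1L: "(\<lambda>t. \<phi> (\<gamma> t)) integrable_on {0..L}"
    by (rule integrable_subinterval_real[OF i1]) (use LI in auto)
  have i2L: "\<gamma> integrable_on {0..L}"
    by (rule integrable_subinterval_real[OF i2]) (use LI in auto)
  have i1p: "(\<lambda>t. \<phi> (\<gamma> t)) integrable_on {L'..L}"
    by (rule integrable_subinterval_real[OF i1L]) (use L'0 in auto)
  have i2p: "\<gamma> integrable_on {L'..L}"
    by (rule integrable_subinterval_real[OF i2L]) (use L'0 in auto)
  have c1: "integral {0..L} (\<lambda>t. \<phi> (\<gamma> t)) = integral {0..L'} (\<lambda>t. \<phi> (\<gamma> t)) + integral {L'..L} (\<lambda>t. \<phi> (\<gamma> t))"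
    using Henstock_Kurzweil_Integration.integral_combine[OF L'0 _ i1L] LL lj by auto
  have c2: "integral {0..L} \<gamma> = integral {0..L'} \<gamma> + integral {L'..L} \<gamma>"
    using Henstock_Kurzweil_Integration.integral_combine[OF L'0 _ i2L] LL lj by auto
  have aj: "a j \<in> {0..1}" using a01 AI j(1) by auto
  have piece: "integral {L'..L} (\<lambda>t. \<phi> (\<gamma> t)) \<le>
      integral {L'..L} (\<lambda>t. \<phi> (a j) + c (a j) * (\<gamma> t - a j))"
  proof (rule integral_le[OF i1p])
    show "(\<lambda>t. \<phi> (a j) + c (a j) * (\<gamma> t - a j)) integrable_on {L'..L}"
      using i2p by (rule int_affine)
    fix t assume "t \<in> {L'..L}"
    then have "\<gamma> t \<in> {0..1}" using g01 L'0 LI by auto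
    then show "\<phi> (\<gamma> t) \<le> \<phi> (a j) + c (a j) * (\<gamma> t - a j)" using sd aj by auto
  qed
  have pv: "integral {L'..L} (\<lambda>t. \<phi> (a j) + c (a j) * (\<gamma> t - a j))
      = lam j * \<phi> (a j) + c (a j) * (integral {L'..L} \<gamma> - lam j * a j)"
  proof -
    have "integral {L'..L} (\<lambda>t. (\<phi> (a j) - c (a j) * a j) + c (a j) * \<gamma> t)
       = integral {L'..L} (\<lambda>t. (\<phi> (a j) - c (a j) * a j)) + integral {L'..L} (\<lambda>t. c (a j) * \<gamma> t)"
      by (rule integral_add) (use i2p integrable_cmul[OF i2p, of "c (a j)"] in auto)
    also have "\<dots> = lam j * \<phi> (a j) + c (a j) * (integral {L'..L} \<gamma> - lam j * a j)"
      using LL lj by (simp add: algebra_simps)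
    finally show ?thesis by (simp add: algebra_simps)
  qed
  have IH: "(\<Sum>i\<in>?A'. lam i * \<phi> (a i)) \<ge> integral {0..L'} (\<lambda>t. \<phi> (\<gamma> t))
        - c (a j) * (integral {0..L'} \<gamma> - (\<Sum>i\<in>?A'. lam i * a i))"
    using remove.IH[OF j(1)] aj jmin unfolding L'_def by auto
  have sA: "(\<Sum>i\<in>A. lam i * \<phi> (a i)) = (\<Sum>i\<in>?A'. lam i * \<phi> (a i)) + lam j * \<phi> (a j)"
    "(\<Sum>i\<in>A. lam i * a i) = (\<Sum>i\<in>?A'. lam i * a i) + lam j * a j"
    using finA j(1) by (simp_all add: sum.remove)
  have main: "(\<Sum>i\<in>A. lam i * \<phi> (a i)) \<ge> integral {0..L} (\<lambda>t. \<phi> (\<gamma> t))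
        - c (a j) * (integral {0..L} \<gamma> - (\<Sum>i\<in>A. lam i * a i))"
    using IH piece pv c1 c2 sA by (simp add: algebra_simps)
  have D: "integral {0..L} \<gamma> - (\<Sum>i\<in>A. lam i * a i) \<ge> 0"
    using sub AI unfolding L_def by auto
  show ?case
  proof (intro ballI impI)
    fix m assume m: "m \<in> {0..1}" "\<forall>i\<in>A. m \<le> a i"
    have "c (a j) \<le> c m" using ca m aj j(1) by auto
    then have "c (a j) * (integral {0..L} \<gamma> - (\<Sum>i\<in>A. lam i * a i))
        \<le> c m * (integral {0..L} \<gamma> - (\<Sum>i\<in>A. lam i * a i))"
      using D by (rule mult_right_mono)
    then show "(\<Sum>i\<in>A. lam i * \<phi> (a i)) \<ge> integral {0..sum lam A} (\<lambda>t. \<phi> (\<gamma> t))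
        - c m * (integral {0..sum lam A} \<gamma> - (\<Sum>i\<in>A. lam i * a i))"
      using main unfolding L_def by linarith
  qed
qed

lemma oneD:
  fixes lam a :: "'i \<Rightarrow> real" and \<phi> c \<gamma> :: "real \<Rightarrow> real"
  assumes fin: "finite I" and pos: "\<forall>i\<in>I. lam i > 0" and a01: "\<forall>i\<in>I. a i \<in> {0..1}"
  and sd: "\<forall>x\<in>{0..1}. \<forall>y\<in>{0..1}. \<phi> y \<le> \<phi> x + c x * (y - x)"
  and ca: "\<forall>x\<in>{0..1}. \<forall>y\<in>{0..1}. x \<le> y \<longrightarrow> c y \<le> c x"
  and g01: "\<forall>t\<in>{0..sum lam I}. \<gamma> t \<in> {0..1}"
  and i1: "(\<lambda>t. \<phi> (\<gamma> t)) integrable_on {0..sum lam I}" and i2: "\<gamma> integrable_on {0..sum lam I}"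
  and sub: "\<forall>S\<subseteq>I. (\<Sum>i\<in>S. lam i * a i) \<le> integral {0..sum lam S} \<gamma>"
  and eq: "(\<Sum>i\<in>I. lam i * a i) = integral {0..sum lam I} \<gamma>"
  shows "(\<Sum>i\<in>I. lam i * \<phi> (a i)) \<ge> integral {0..sum lam I} (\<lambda>t. \<phi> (\<gamma> t))"
  using oneD_step[OF assms(1-9) order_refl] a01 eq by auto


lemma integral_le_but_one:
  fixes g g' :: "real \<Rightarrow> real"
  assumes ig: "g integrable_on {a..b}" and ig': "g' integrable_on {a..b}"
    and le: "\<And>x. x\<in>{a..b} \<Longrightarrow> x \<noteq> z \<Longrightarrow> g x \<le> g' x"
  shows "integral {a..b} g \<le> integral {a..b} g'"
proof -
  let ?g2 = "\<lambda>x. if x = z then g' x else g x"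
  have e: "integral {a..b} g = integral {a..b} ?g2"
    by (rule integral_spike[of "{z}"]) auto
  have i2: "?g2 integrable_on {a..b}"
    by (rule integrable_spike[OF ig, of "{z}"]) auto
  have "integral {a..b} ?g2 \<le> integral {a..b} g'"
    by (rule integral_le[OF i2 ig']) (use le in auto)
  then show ?thesis using e by simp
qed

context drf begin

lemma cert_vert:
  fixes h k :: "real \<Rightarrow> real"
  assumes hk: "\<And>x. x\<in>{0..1} \<Longrightarrow> h x \<in> {0..1}" "\<And>u. u\<in>{0..1} \<Longrightarrow> k u \<in> {0..1}"
  and il1: "\<And>a u. a\<in>{0..1} \<Longrightarrow> u\<in>{0..1} \<Longrightarrow> h a < u \<Longrightarrow> a \<le> k u"
  and il2: "\<And>a u. a\<in>{0..1} \<Longrightarrow> u\<in>{0..1} \<Longrightarrow> u < h a \<Longrightarrow> k u \<le> a"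
  and dint: "(\<lambda>u. f2 (k u, u)) integrable_on {0..1}"
  and ab: "a\<in>{0..1}" "b\<in>{0..1}"
  shows "f (a, h a) - integral {0..h a} (\<lambda>u. f2 (k u, u)) \<le> f (a, b) - integral {0..b} (\<lambda>u. f2 (k u, u))"
proof -
  define y where "y = h a"
  let ?D = "\<lambda>u. f2 (k u, u)"
  have y01: "y \<in> {0..1}" using hk(1)[OF ab(1)] y_def by simp
  show ?thesis
  proof (cases "y \<le> b")
    case True
    have iD: "?D integrable_on {0..b}" by (rule integrable_subinterval_real[OF dint]) (use ab in auto)
    have cmb: "integral {0..b} ?D = integral {0..y} ?D + integral {y..b} ?D"
      using Henstock_Kurzweil_Integration.integral_combine[OF _ True iD] y01 by auto
    have ft: "((\<lambda>s. f2 (a, s)) has_integral (f (a, b) - f (a, y))) {y..b}"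
      by (rule ftc_vert) (use ab y01 True in auto)
    have "integral {y..b} ?D \<le> integral {y..b} (\<lambda>s. f2 (a, s))"
    proof (rule integral_le_but_one[of _ _ _ _ y])
      show "?D integrable_on {y..b}" by (rule integrable_subinterval_real[OF dint]) (use ab y01 in auto)
      show "(\<lambda>s. f2 (a, s)) integrable_on {y..b}" using ft by blast
      fix u assume u: "u \<in> {y..b}" "u \<noteq> y"
      then have u01: "u \<in> {0..1}" using ab y01 by auto
      have "a \<le> k u" using il1[OF ab(1) u01] u y_def by auto
      then show "f2 (k u, u) \<le> f2 (a, u)"
        using f2_anti[of a u "k u" u] ab hk(2)[OF u01] u01 by (auto simp: sq_def)
    qed
    then show ?thesis using cmb ft y_def by (simp add: integral_unique)
  next
    case False
    have iD: "?D integrable_on {0..y}" by (rule integrable_subinterval_real[OF dint]) (use y01 in auto)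
    have cmb: "integral {0..y} ?D = integral {0..b} ?D + integral {b..y} ?D"
      using Henstock_Kurzweil_Integration.integral_combine[OF _ _ iD, of b] ab False by auto
    have ft: "((\<lambda>s. f2 (a, s)) has_integral (f (a, y) - f (a, b))) {b..y}"
      by (rule ftc_vert) (use ab y01 False in auto)
    have "integral {b..y} (\<lambda>s. f2 (a, s)) \<le> integral {b..y} ?D"
    proof (rule integral_le_but_one[of _ _ _ _ y])
      show "?D integrable_on {b..y}" by (rule integrable_subinterval_real[OF dint]) (use ab y01 in auto)
      show "(\<lambda>s. f2 (a, s)) integrable_on {b..y}" using ft by blast
      fix u assume u: "u \<in> {b..y}" "u \<noteq> y"
      then have u01: "u \<in> {0..1}" using ab y01 by auto
      have "k u \<le> a" using il2[OF ab(1) u01] u y_def by auto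
      then show "f2 (a, u) \<le> f2 (k u, u)"
        using f2_anti[of "k u" u a u] ab hk(2)[OF u01] u01 by (auto simp: sq_def)
    qed
    then show ?thesis using cmb ft y_def by (simp add: integral_unique)
  qed
qed

end

definition Hf :: "real \<Rightarrow> real" where "Hf x = x * (1 - ln x)"

lemma Hf_exp: "Hf (exp (-t)) = exp (-t) * (1 + t)"
  by (simp add: Hf_def)

lemma Hf_deriv: "0 < x \<Longrightarrow> (Hf has_real_derivative (- ln x)) (at x)"
  unfolding Hf_def by (auto intro!: derivative_eq_intros simp: field_simps)

lemma Hf_strict: assumes "0 < x" "x < y" "y \<le> 1" shows "Hf x < Hf y"
proof -
  have "\<And>z. x \<le> z \<Longrightarrow> z \<le> y \<Longrightarrow> DERIV Hf z :> - ln z" using assms Hf_deriv by auto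
  from MVT2[OF assms(2) this] obtain z where z: "x < z" "z < y" "Hf y - Hf x = (y - x) * (- ln z)" by auto
  have "ln z < 0" using z assms by auto
  then have "(y - x) * (- ln z) > 0" using assms by (intro mult_pos_pos) auto
  then show ?thesis using z by linarith
qed

lemma Hf_mono: "0 < x \<Longrightarrow> x \<le> y \<Longrightarrow> y \<le> 1 \<Longrightarrow> Hf x \<le> Hf y"
  using Hf_strict[of x y] by (cases "x = y") auto

lemma Hf_one: "Hf 1 = 1" by (simp add: Hf_def)

lemma Hf_range: assumes "0 < x" "x \<le> 1" shows "x \<le> Hf x" "Hf x \<le> 1"
proof -
  have "ln x \<le> 0" using assms by auto
  then show "x \<le> Hf x" using assms unfolding Hf_def by (simp add: algebra_simps mult_nonneg_nonpos)
  show "Hf x \<le> 1" using Hf_mono[OF assms(1) assms(2) order_refl] Hf_one by simp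
qed

lemma Hf_cont: "0 < a \<Longrightarrow> continuous_on {a..b} Hf"
  unfolding Hf_def by (intro continuous_intros) auto

definition hinv :: "real \<Rightarrow> real" where "hinv u = (THE x. x \<in> {0<..1} \<and> Hf x = u)"

lemma Hf_inj: "x \<in> {0<..1} \<Longrightarrow> y \<in> {0<..1} \<Longrightarrow> Hf x = Hf y \<Longrightarrow> x = y"
  using Hf_strict[of x y] Hf_strict[of y x] by (cases x y rule: linorder_cases) auto

lemma hinv_Hf: "x \<in> {0<..1} \<Longrightarrow> hinv (Hf x) = x"
  unfolding hinv_def by (rule the_equality) (auto intro: Hf_inj)

lemma Hf_hinv: assumes "0 < x0" "x0 \<le> 1" "u \<in> {Hf x0..1}"
  shows "hinv u \<in> {x0..1}" "Hf (hinv u) = u"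
proof -
  obtain x where x: "x0 \<le> x" "x \<le> 1" "Hf x = u"
    using IVT'[of Hf x0 u 1] assms Hf_cont[OF assms(1), of 1] Hf_one by auto
  then have "hinv u = x" using hinv_Hf[of x] assms by auto
  then show "hinv u \<in> {x0..1}" "Hf (hinv u) = u" using x by auto
qed

lemma Hf_image: assumes "0 < x0" "x0 \<le> 1" shows "Hf ` {x0..1} = {Hf x0..1}"
proof
  show "Hf ` {x0..1} \<subseteq> {Hf x0..1}" using Hf_mono Hf_range assms by auto
  show "{Hf x0..1} \<subseteq> Hf ` {x0..1}"
  proof
    fix u assume "u \<in> {Hf x0..1}"
    from Hf_hinv[OF assms this] show "u \<in> Hf ` {x0..1}" by (metis image_eqI)
  qed
qed

lemma hinv_cont: assumes "0 < x0" "x0 \<le> 1" shows "continuous_on {Hf x0..1} hinv"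
proof -
  have "continuous_on (Hf ` {x0..1}) hinv"
    by (rule continuous_on_inv[OF Hf_cont[OF assms(1)]]) (use assms hinv_Hf in auto)
  then show ?thesis using Hf_image[OF assms] by simp
qed

lemma interior_sq: "interior sq = {0<..<1} \<times> {0<..<1}"
  unfolding sq_def interior_Times by simp

context drf begin

lemma curve_const:
  fixes h k :: "real \<Rightarrow> real"
  assumes x0: "0 < x0" "x0 \<le> 1"
  and hH: "\<And>x. x \<in> {x0..1} \<Longrightarrow> h x = Hf x"
  and kH: "\<And>u. Hf x0 < u \<Longrightarrow> u \<le> 1 \<Longrightarrow> k u = hinv u"
  and cint: "(\<lambda>s. f1 (s, h s)) integrable_on {0..1}"
  and dint: "(\<lambda>u. f2 (k u, u)) integrable_on {0..1}"
  and x: "x \<in> {x0..1}"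
  shows "f (x, Hf x) - integral {0..x} (\<lambda>s. f1 (s, h s)) - integral {0..Hf x} (\<lambda>u. f2 (k u, u))
       = f (x0, Hf x0) - integral {0..x0} (\<lambda>s. f1 (s, h s)) - integral {0..Hf x0} (\<lambda>u. f2 (k u, u))"
proof (cases "x = x0")
  case True then show ?thesis by simp
next
  case False
  then have xx: "x0 < x" using x by auto
  define G where "G = (\<lambda>x. f (x, Hf x) - integral {0..x} (\<lambda>s. f1 (s, h s)) - integral {0..Hf x} (\<lambda>u. f2 (k u, u)))"
  have Hin: "(y, Hf y) \<in> sq" if "y \<in> {x0..1}" for y
  proof -
    have "0 < y" "y \<le> 1" using that x0 by auto
    then show ?thesis using Hf_range[of y] unfolding sq_def by auto
  qed
  have Hin01: "\<And>y. y \<in> {x0..1} \<Longrightarrow> Hf y \<in> {0..1}" using Hin by (auto simp: sq_def)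
  have sub: "{x0..x} \<subseteq> {x0..1}" using x by auto
  have contG: "continuous_on {x0..x} G"
    unfolding G_def
  proof (intro continuous_on_diff)
    have "continuous_on {x0..x} (\<lambda>y. (y, Hf y))"
      using Hf_cont[OF x0(1), of x] by (intro continuous_intros) auto
    then show "continuous_on {x0..x} (\<lambda>y. f (y, Hf y))"
      by (rule continuous_on_compose2[OF cont_f]) (use Hin sub in auto)
    show "continuous_on {x0..x} (\<lambda>y. integral {0..y} (\<lambda>s. f1 (s, h s)))"
      by (rule continuous_on_subset[OF indefinite_integral_continuous_1[OF cint]]) (use x0 x in auto)
    show "continuous_on {x0..x} (\<lambda>y. integral {0..Hf y} (\<lambda>u. f2 (k u, u)))"
      by (rule continuous_on_compose2[OF indefinite_integral_continuous_1[OF dint] Hf_cont[OF x0(1)]])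
         (use Hin01 sub in auto)
  qed
  have derG: "(G has_real_derivative 0) (at y)" if y: "x0 < y" "y < x" for y
  proof -
    have y1: "0 < y" "y < 1" using y x x0 by auto
    have Hy: "0 < Hf y" "Hf y < 1" using Hf_range[of y] Hf_strict[of y 1] Hf_one y1 by auto
    define p where "p = (y, Hf y)"
    have pint: "p \<in> interior sq" unfolding interior_sq p_def using y1 Hy by auto
    have psq: "p \<in> sq" using pint interior_subset by blast
    have cp: "(\<lambda>y. (y, Hf y)) y = p" by (simp add: p_def)
    have dcurve: "((\<lambda>y. (y, Hf y)) has_derivative (\<lambda>t. (t, - ln y * t))) (at y)"
    proof -
      have "(Hf has_derivative (\<lambda>t. - ln y * t)) (at y)"
        using Hf_deriv[OF y1(1)] unfolding has_field_derivative_def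
        by (rule has_derivative_eq_rhs) (simp add: fun_eq_iff)
      then show ?thesis by (intro has_derivative_Pair has_derivative_ident)
    qed
    have dfp: "(f has_derivative (\<lambda>(h, k). f1 p * h + f2 p * k)) (at p)"
      using df[OF psq] at_within_interior[OF pint] by simp
    have d1: "((\<lambda>y. f (y, Hf y)) has_real_derivative (f1 p + f2 p * (- ln y))) (at y)"
    proof -
      have "((f \<circ> (\<lambda>y. (y, Hf y))) has_derivative ((\<lambda>(h, k). f1 p * h + f2 p * k) \<circ> (\<lambda>t. (t, - ln y * t)))) (at y)"
        using diff_chain_at[OF dcurve, unfolded cp, OF dfp] .
      then show ?thesis unfolding o_def has_field_derivative_def
        by (rule has_derivative_eq_rhs) (auto simp: algebra_simps fun_eq_iff)
    qed
    have yint: "y \<in> interior {0..1}" using y1 by auto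
    have cc: "continuous (at y within {0..1}) (\<lambda>s. f1 (s, h s))"
    proof -
      have "isCont (\<lambda>y. (y, Hf y)) y" using dcurve has_derivative_continuous by blast
      moreover have "isCont f1 p" using continuous_on_interior[OF cont_f1 pint] .
      ultimately have "isCont (\<lambda>s. f1 (s, Hf s)) y"
        using continuous_at_compose[of y "\<lambda>y. (y, Hf y)" f1] cp by (simp add: o_def)
      then have "continuous (at y within {0..1}) (\<lambda>s. f1 (s, Hf s))"
        by (rule continuous_at_imp_continuous_within)
      then show ?thesis
        by (rule continuous_transform_within[of _ _ _ "y - x0"]) (use y y1 hH in \<open>auto simp: dist_real_def\<close>)
    qed
    have d2: "((\<lambda>y. integral {0..y} (\<lambda>s. f1 (s, h s))) has_real_derivative f1 (y, h y)) (at y)"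
      using integral_has_vector_derivative_continuous_at[OF cint, of y "{}"] cc y1 at_within_interior[OF yint]
      by (simp add: has_real_derivative_iff_has_vector_derivative)
    have hy: "h y = Hf y" using hH y x by auto
    define u where "u = Hf y"
    have u1: "Hf x0 < u" "u < 1" "0 < u" using Hf_strict[of x0 y] x0 y y1 Hy u_def by auto
    have uint: "u \<in> interior {0..1}" using u1 by auto
    have hu: "hinv u = y" using hinv_Hf[of y] y1 u_def by auto
    have dc: "continuous (at u within {0..1}) (\<lambda>u. f2 (k u, u))"
    proof -
      have "u \<in> interior {Hf x0..1}" using u1 by auto
      then have "isCont hinv u" using continuous_on_interior[OF hinv_cont[OF x0]] by blast
      then have "isCont (\<lambda>u. (hinv u, u)) u" by (intro continuous_intros)
      moreover have "isCont f2 p" using continuous_on_interior[OF cont_f2 pint] .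
      moreover have "(hinv u, u) = p" using hu u_def p_def by simp
      ultimately have "isCont (\<lambda>u. f2 (hinv u, u)) u"
        using continuous_at_compose[of u "\<lambda>u. (hinv u, u)" f2] by (simp add: o_def)
      then have "continuous (at u within {0..1}) (\<lambda>u. f2 (hinv u, u))"
        by (rule continuous_at_imp_continuous_within)
      then show ?thesis
        by (rule continuous_transform_within[of _ _ _ "u - Hf x0"]) (use u1 kH in \<open>auto simp: dist_real_def\<close>)
    qed
    have d3a: "((\<lambda>u. integral {0..u} (\<lambda>u. f2 (k u, u))) has_real_derivative f2 (k u, u)) (at u)"
      using integral_has_vector_derivative_continuous_at[OF dint, of u "{}"] dc u1 at_within_interior[OF uint]
      by (simp add: has_real_derivative_iff_has_vector_derivative)
    have d3: "((\<lambda>y. integral {0..Hf y} (\<lambda>u. f2 (k u, u))) has_real_derivative (f2 (k u, u) * (- ln y))) (at y)"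
      using DERIV_chain2[OF d3a[unfolded u_def] Hf_deriv[OF y1(1)]] u_def by simp
    have ku: "k u = y" using kH[of u] u1 hu by auto
    have "(G has_real_derivative (f1 p + f2 p * (- ln y) - f1 (y, h y) - f2 (k u, u) * (- ln y))) (at y)"
      unfolding G_def by (intro DERIV_diff d1 d2 d3)
    moreover have "f1 p + f2 p * (- ln y) - f1 (y, h y) - f2 (k u, u) * (- ln y) = 0"
      using hy ku p_def u_def by simp
    ultimately show ?thesis by simp
  qed
  obtain \<xi> where "x0 < \<xi>" "\<xi> < x" "G x - G x0 = (*) 0 (x - x0)"
    by (rule mvt[OF xx contG, of "\<lambda>_. (*) 0"])
       (use derG in \<open>auto simp: has_field_derivative_def\<close>)
  then show ?thesis unfolding G_def by simp
qed

end


lemma int_anti: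
  fixes g :: "real \<Rightarrow> real"
  assumes "\<And>x y. x \<in> {a..b} \<Longrightarrow> y \<in> {a..b} \<Longrightarrow> x \<le> y \<Longrightarrow> g y \<le> g x"
  shows "g integrable_on {a..b}"
proof -
  have "mono_on {a..b} (\<lambda>x. - g x)" using assms by (auto simp: mono_on_def)
  then have "(\<lambda>x. - g x) integrable_on {a..b}" by (rule integrable_on_mono_on)
  then show ?thesis using integrable_neg[of "\<lambda>x. - g x"] by simp
qed

lemma superdiff:
  fixes c :: "real \<Rightarrow> real"
  assumes ca: "\<And>x y. x \<in> {0..1} \<Longrightarrow> y \<in> {0..1} \<Longrightarrow> x \<le> y \<Longrightarrow> c y \<le> c x"
    and x: "x \<in> {0..1}" and y: "y \<in> {0..1}"
  shows "integral {0..y} c \<le> integral {0..x} c + c x * (y - x)"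
proof -
  have ci: "c integrable_on {0..1}" using int_anti[OF ca] .
  show ?thesis
  proof (cases "x \<le> y")
    case True
    have iy: "c integrable_on {0..y}" by (rule integrable_subinterval_real[OF ci]) (use y in auto)
    have cmb: "integral {0..y} c = integral {0..x} c + integral {x..y} c"
      using Henstock_Kurzweil_Integration.integral_combine[OF _ True iy] x by auto
    have "integral {x..y} c \<le> integral {x..y} (\<lambda>_. c x)"
      by (rule integral_le) (use integrable_subinterval_real[OF ci, of x y] x y ca in auto)
    then show ?thesis using cmb True by (simp add: mult.commute)
  next
    case False
    have ix: "c integrable_on {0..x}" by (rule integrable_subinterval_real[OF ci]) (use x in auto)
    have cmb: "integral {0..x} c = integral {0..y} c + integral {y..x} c"
      using Henstock_Kurzweil_Integration.integral_combine[OF _ _ ix, of y] y False by auto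
    have "integral {y..x} (\<lambda>_. c x) \<le> integral {y..x} c"
    proof (rule integral_le)
      show "c integrable_on {y..x}" by (rule integrable_subinterval_real[OF ci]) (use x y in auto)
      fix t assume "t \<in> {y..x}" then show "c x \<le> c t" using ca[of t x] x y by auto
    qed (rule integrable_const_ivl)
    then show ?thesis using cmb False by (simp add: algebra_simps)
  qed
qed

context drf begin

lemma chain_anti:
  fixes h k :: "real \<Rightarrow> real"
  assumes hr: "\<And>x. x\<in>{0..1} \<Longrightarrow> h x \<in> {0..1}" and kr: "\<And>u. u\<in>{0..1} \<Longrightarrow> k u \<in> {0..1}"
  and hm: "\<And>x y. x\<in>{0..1} \<Longrightarrow> y\<in>{0..1} \<Longrightarrow> x \<le> y \<Longrightarrow> h x \<le> h y"
  and km: "\<And>x y. x\<in>{0..1} \<Longrightarrow> y\<in>{0..1} \<Longrightarrow> x \<le> y \<Longrightarrow> k x \<le> k y"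
  shows "\<And>x y. x\<in>{0..1} \<Longrightarrow> y\<in>{0..1} \<Longrightarrow> x \<le> y \<Longrightarrow> f1 (y, h y) \<le> f1 (x, h x)"
    "\<And>x y. x\<in>{0..1} \<Longrightarrow> y\<in>{0..1} \<Longrightarrow> x \<le> y \<Longrightarrow> f2 (k y, y) \<le> f2 (k x, x)"
proof -
  fix x y :: real assume "x\<in>{0..1}" "y\<in>{0..1}" "x \<le> y"
  then show "f1 (y, h y) \<le> f1 (x, h x)" using f1_anti[of x "h x" y "h y"] hr hm by (auto simp: sq_def)
next
  fix x y :: real assume "x\<in>{0..1}" "y\<in>{0..1}" "x \<le> y"
  then show "f2 (k y, y) \<le> f2 (k x, x)" using f2_anti[of "k x" x "k y" y] kr km by (auto simp: sq_def)
qed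

lemma cert_from_chain:
  fixes h k :: "real \<Rightarrow> real"
  assumes hr: "\<And>x. x\<in>{0..1} \<Longrightarrow> h x \<in> {0..1}" and kr: "\<And>u. u\<in>{0..1} \<Longrightarrow> k u \<in> {0..1}"
  and hm: "\<And>x y. x\<in>{0..1} \<Longrightarrow> y\<in>{0..1} \<Longrightarrow> x \<le> y \<Longrightarrow> h x \<le> h y"
  and km: "\<And>x y. x\<in>{0..1} \<Longrightarrow> y\<in>{0..1} \<Longrightarrow> x \<le> y \<Longrightarrow> k x \<le> k y"
  and il1: "\<And>a u. a\<in>{0..1} \<Longrightarrow> u\<in>{0..1} \<Longrightarrow> h a < u \<Longrightarrow> a \<le> k u"
  and il2: "\<And>a u. a\<in>{0..1} \<Longrightarrow> u\<in>{0..1} \<Longrightarrow> u < h a \<Longrightarrow> k u \<le> a"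
  and ch: "\<And>a. a\<in>{0..1} \<Longrightarrow> f (a, h a) = integral {0..a} (\<lambda>s. f1 (s, h s)) + integral {0..h a} (\<lambda>u. f2 (k u, u))"
  and ab: "a\<in>{0..1}" "b\<in>{0..1}"
  shows "integral {0..a} (\<lambda>s. f1 (s, h s)) + integral {0..b} (\<lambda>u. f2 (k u, u)) \<le> f (a, b)"
proof -
  have dint: "(\<lambda>u. f2 (k u, u)) integrable_on {0..1}"
    by (rule int_anti) (rule chain_anti(2)[OF hr kr hm km], auto)
  have "f (a, h a) - integral {0..h a} (\<lambda>u. f2 (k u, u)) \<le> f (a, b) - integral {0..b} (\<lambda>u. f2 (k u, u))"
    by (rule cert_vert[OF hr kr il1 il2 dint ab])
  then show ?thesis using ch[OF ab(1)] by linarith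
qed

end

lemma Hf_less_imp: "0 < x \<Longrightarrow> x \<le> 1 \<Longrightarrow> 0 < y \<Longrightarrow> y \<le> 1 \<Longrightarrow> Hf x < Hf y \<Longrightarrow> x < y"
  using Hf_mono[of y x] by (cases "x < y") auto

lemma Hf_le_imp: "0 < x \<Longrightarrow> x \<le> 1 \<Longrightarrow> 0 < y \<Longrightarrow> y \<le> 1 \<Longrightarrow> Hf x \<le> Hf y \<Longrightarrow> x \<le> y"
  using Hf_strict[of y x] by (cases "x \<le> y") auto

lemma hinv_mono: assumes "0 < x0" "x0 \<le> 1" "Hf x0 \<le> u" "u \<le> v" "v \<le> 1" shows "hinv u \<le> hinv v"
proof -
  have "hinv u \<in> {x0..1}" "Hf (hinv u) = u" "hinv v \<in> {x0..1}" "Hf (hinv v) = v"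
    using Hf_hinv[OF assms(1,2)] assms by auto
  then show ?thesis using Hf_le_imp[of "hinv u" "hinv v"] assms by auto
qed

definition h1 :: "real \<Rightarrow> real \<Rightarrow> real" where "h1 x0 x = (if x \<le> x0 then Hf x0 else Hf x)"
definition k1 :: "real \<Rightarrow> real \<Rightarrow> real" where "k1 x0 u = (if u \<le> Hf x0 then 0 else hinv u)"

definition h2 :: "real \<Rightarrow> real \<Rightarrow> real" where "h2 x0 x = (if x < x0 then x else Hf x)"
definition k2 :: "real \<Rightarrow> real \<Rightarrow> real" where
  "k2 x0 u = (if u \<le> x0 then u else if u \<le> Hf x0 then x0 else hinv u)"

context drf begin

lemma case1_chain:
  assumes x0: "0 < x0" "x0 \<le> 1" and f00: "f (0,0) = 0"
  shows "\<And>x. x\<in>{0..1} \<Longrightarrow> h1 x0 x \<in> {0..1}" "\<And>u. u\<in>{0..1} \<Longrightarrow> k1 x0 u \<in> {0..1}"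
  and "\<And>x y. x\<in>{0..1} \<Longrightarrow> y\<in>{0..1} \<Longrightarrow> x \<le> y \<Longrightarrow> h1 x0 x \<le> h1 x0 y"
  and "\<And>x y. x\<in>{0..1} \<Longrightarrow> y\<in>{0..1} \<Longrightarrow> x \<le> y \<Longrightarrow> k1 x0 x \<le> k1 x0 y"
  and "\<And>a u. a\<in>{0..1} \<Longrightarrow> u\<in>{0..1} \<Longrightarrow> h1 x0 a < u \<Longrightarrow> a \<le> k1 x0 u"
  and "\<And>a u. a\<in>{0..1} \<Longrightarrow> u\<in>{0..1} \<Longrightarrow> u < h1 x0 a \<Longrightarrow> k1 x0 u \<le> a"
proof -
  have b: "x0 \<le> Hf x0" "Hf x0 \<le> 1" using Hf_range[OF x0] by auto
  have hh: "\<And>u. u \<in> {Hf x0..1} \<Longrightarrow> hinv u \<in> {x0..1} \<and> Hf (hinv u) = u" using Hf_hinv[OF x0] by auto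
  show "h1 x0 x \<in> {0..1}" if "x\<in>{0..1}" for x
  proof (cases "x \<le> x0")
    case True then show ?thesis using b x0 unfolding h1_def by auto
  next
    case False then show ?thesis using Hf_range[of x] x0 that unfolding h1_def by auto
  qed
  show "k1 x0 u \<in> {0..1}" if "u\<in>{0..1}" for u
  proof (cases "u \<le> Hf x0")
    case True then show ?thesis unfolding k1_def by auto
  next
    case False then show ?thesis using hh[of u] that x0 unfolding k1_def by auto
  qed
  show "h1 x0 x \<le> h1 x0 y" if "x\<in>{0..1}" "y\<in>{0..1}" "x \<le> y" for x y
    using Hf_mono[of x0 y] Hf_mono[of x y] x0 that unfolding h1_def by auto
  show "k1 x0 x \<le> k1 x0 y" if "x\<in>{0..1}" "y\<in>{0..1}" "x \<le> y" for x y
  proof (cases "y \<le> Hf x0")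
    case True then show ?thesis using that unfolding k1_def by auto
  next
    case False
    then have "hinv y \<ge> x0" using hh[of y] that by auto
    then show ?thesis using hinv_mono[OF x0, of x y] False that x0 unfolding k1_def by auto
  qed
  show "\<And>a u. a\<in>{0..1} \<Longrightarrow> u\<in>{0..1} \<Longrightarrow> h1 x0 a < u \<Longrightarrow> a \<le> k1 x0 u"
  proof -
    fix a u :: real assume a: "a\<in>{0..1}" and u: "u\<in>{0..1}" and lt: "h1 x0 a < u"
    have "Hf x0 \<le> h1 x0 a" using Hf_mono[of x0 a] x0 a unfolding h1_def by auto
    then have ub: "Hf x0 < u" using lt by auto
    then have k: "k1 x0 u = hinv u" unfolding k1_def by auto
    have hu: "hinv u \<in> {x0..1}" "Hf (hinv u) = u" using hh[of u] ub u by auto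
    show "a \<le> k1 x0 u"
    proof (cases "a \<le> x0")
      case True then show ?thesis using k hu by auto
    next
      case False
      then have "Hf a < Hf (hinv u)" using lt hu unfolding h1_def by auto
      then show ?thesis using Hf_less_imp[of a "hinv u"] False x0 a hu k by auto
    qed
  qed
  show "\<And>a u. a\<in>{0..1} \<Longrightarrow> u\<in>{0..1} \<Longrightarrow> u < h1 x0 a \<Longrightarrow> k1 x0 u \<le> a"
  proof -
    fix a u :: real assume a: "a\<in>{0..1}" and u: "u\<in>{0..1}" and lt: "u < h1 x0 a"
    show "k1 x0 u \<le> a"
    proof (cases "u \<le> Hf x0")
      case True then show ?thesis using a unfolding k1_def by auto
    next
      case False
      then have ax: "x0 < a" using lt unfolding h1_def by (auto split: if_splits)
      have k: "k1 x0 u = hinv u" using False unfolding k1_def by auto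
      have hu: "hinv u \<in> {x0..1}" "Hf (hinv u) = u" using hh[of u] False u by auto
      have "Hf (hinv u) < Hf a" using lt hu ax unfolding h1_def by auto
      then show ?thesis using Hf_less_imp[of "hinv u" a] ax x0 a hu k by auto
    qed
  qed
qed

lemma case1_eq:
  assumes x0: "0 < x0" "x0 \<le> 1" and f00: "f (0,0) = 0"
  shows "\<And>u. u\<in>{0..Hf x0} \<Longrightarrow> f (0, u) = integral {0..0} (\<lambda>s. f1 (s, h1 x0 s)) + integral {0..u} (\<lambda>u. f2 (k1 x0 u, u))"
  and "\<And>a. a\<in>{0..1} \<Longrightarrow> f (a, h1 x0 a) = integral {0..a} (\<lambda>s. f1 (s, h1 x0 s)) + integral {0..h1 x0 a} (\<lambda>u. f2 (k1 x0 u, u))"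
proof -
  note C = case1_chain[OF x0 f00]
  have b: "x0 \<le> Hf x0" "Hf x0 \<le> 1" using Hf_range[OF x0] by auto
  have cint: "(\<lambda>s. f1 (s, h1 x0 s)) integrable_on {0..1}"
    by (rule int_anti) (rule chain_anti(1)[OF C(1-4)], auto)
  have dint: "(\<lambda>u. f2 (k1 x0 u, u)) integrable_on {0..1}"
    by (rule int_anti) (rule chain_anti(2)[OF C(1-4)], auto)
  have vert: "f (0, u) = integral {0..u} (\<lambda>u. f2 (k1 x0 u, u))" if u: "u\<in>{0..Hf x0}" for u
  proof -
    have "integral {0..u} (\<lambda>u. f2 (k1 x0 u, u)) = integral {0..u} (\<lambda>s. f2 (0, s))"
      by (rule integral_cong) (use u in \<open>auto simp: k1_def\<close>)
    also have "\<dots> = f (0, u) - f (0, 0)" by (rule integral_unique, rule ftc_vert) (use u b in auto)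
    finally show ?thesis using f00 by simp
  qed
  show "\<And>u. u\<in>{0..Hf x0} \<Longrightarrow> f (0, u) = integral {0..0} (\<lambda>s. f1 (s, h1 x0 s)) + integral {0..u} (\<lambda>u. f2 (k1 x0 u, u))"
    using vert by simp
  have horiz: "f (a, Hf x0) = integral {0..a} (\<lambda>s. f1 (s, h1 x0 s)) + integral {0..Hf x0} (\<lambda>u. f2 (k1 x0 u, u))"
    if a: "a \<in> {0..x0}" for a
  proof -
    have "integral {0..a} (\<lambda>s. f1 (s, h1 x0 s)) = integral {0..a} (\<lambda>s. f1 (s, Hf x0))"
      by (rule integral_cong) (use a in \<open>auto simp: h1_def\<close>)
    also have "\<dots> = f (a, Hf x0) - f (0, Hf x0)" by (rule integral_unique, rule ftc_horiz) (use a b x0 in auto)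
    finally show ?thesis using vert[of "Hf x0"] b x0 by simp
  qed
  show "\<And>a. a\<in>{0..1} \<Longrightarrow> f (a, h1 x0 a) = integral {0..a} (\<lambda>s. f1 (s, h1 x0 s)) + integral {0..h1 x0 a} (\<lambda>u. f2 (k1 x0 u, u))"
  proof -
    fix a :: real assume a: "a\<in>{0..1}"
    show "f (a, h1 x0 a) = integral {0..a} (\<lambda>s. f1 (s, h1 x0 s)) + integral {0..h1 x0 a} (\<lambda>u. f2 (k1 x0 u, u))"
    proof (cases "a \<le> x0")
      case True then show ?thesis using horiz[of a] a unfolding h1_def by auto
    next
      case False
      have cc: "f (a, Hf a) - integral {0..a} (\<lambda>s. f1 (s, h1 x0 s)) - integral {0..Hf a} (\<lambda>u. f2 (k1 x0 u, u))
       = f (x0, Hf x0) - integral {0..x0} (\<lambda>s. f1 (s, h1 x0 s)) - integral {0..Hf x0} (\<lambda>u. f2 (k1 x0 u, u))"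
        by (rule curve_const[OF x0 _ _ cint dint]) (use a False in \<open>auto simp: h1_def k1_def\<close>)
      then show ?thesis using horiz[of x0] x0 False unfolding h1_def by auto
    qed
  qed
qed


lemma case2_chain:
  assumes x0: "0 < x0" "x0 \<le> 1"
  shows "\<And>x. x\<in>{0..1} \<Longrightarrow> h2 x0 x \<in> {0..1}" "\<And>u. u\<in>{0..1} \<Longrightarrow> k2 x0 u \<in> {0..1}"
  and "\<And>x y. x\<in>{0..1} \<Longrightarrow> y\<in>{0..1} \<Longrightarrow> x \<le> y \<Longrightarrow> h2 x0 x \<le> h2 x0 y"
  and "\<And>x y. x\<in>{0..1} \<Longrightarrow> y\<in>{0..1} \<Longrightarrow> x \<le> y \<Longrightarrow> k2 x0 x \<le> k2 x0 y"
  and "\<And>a u. a\<in>{0..1} \<Longrightarrow> u\<in>{0..1} \<Longrightarrow> h2 x0 a < u \<Longrightarrow> a \<le> k2 x0 u"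
  and "\<And>a u. a\<in>{0..1} \<Longrightarrow> u\<in>{0..1} \<Longrightarrow> u < h2 x0 a \<Longrightarrow> k2 x0 u \<le> a"
proof -
  have b: "x0 \<le> Hf x0" "Hf x0 \<le> 1" using Hf_range[OF x0] by auto
  have hh: "\<And>u. u \<in> {Hf x0..1} \<Longrightarrow> hinv u \<in> {x0..1} \<and> Hf (hinv u) = u" using Hf_hinv[OF x0] by auto
  have kge: "x0 \<le> k2 x0 u" if "x0 < u" "u \<le> 1" for u
    using hh[of u] that unfolding k2_def by auto
  show "h2 x0 x \<in> {0..1}" if "x\<in>{0..1}" for x
  proof (cases "x < x0")
    case True then show ?thesis using that unfolding h2_def by auto
  next
    case False then show ?thesis using Hf_range[of x] x0 that unfolding h2_def by auto
  qed
  show "k2 x0 u \<in> {0..1}" if "u\<in>{0..1}" for u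
  proof (cases "u \<le> Hf x0")
    case True then show ?thesis using that x0 unfolding k2_def by auto
  next
    case False then show ?thesis using hh[of u] that x0 b unfolding k2_def by auto
  qed
  show "h2 x0 x \<le> h2 x0 y" if "x\<in>{0..1}" "y\<in>{0..1}" "x \<le> y" for x y
    using Hf_mono[of x0 y] Hf_mono[of x y] Hf_range[of x] x0 b that unfolding h2_def by auto
  show "k2 x0 x \<le> k2 x0 y" if "x\<in>{0..1}" "y\<in>{0..1}" "x \<le> y" for x y
  proof (cases "y \<le> x0")
    case True then show ?thesis using that unfolding k2_def by auto
  next
    case y: False
    show ?thesis
    proof (cases "x \<le> x0")
      case True then show ?thesis using kge[of y] y that unfolding k2_def by auto
    next
      case False
      show ?thesis
      proof (cases "y \<le> Hf x0")
        case True then show ?thesis using False that unfolding k2_def by auto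
      next
        case yb: False
        then have "hinv y \<ge> x0" using hh[of y] that by auto
        then show ?thesis using hinv_mono[OF x0, of x y] yb False that x0 unfolding k2_def by auto
      qed
    qed
  qed
  show "a \<le> k2 x0 u" if a: "a\<in>{0..1}" and u: "u\<in>{0..1}" and lt: "h2 x0 a < u" for a u
  proof (cases "a < x0")
    case True
    then have "a < u" using lt unfolding h2_def by auto
    then show ?thesis using True kge[of u] u unfolding k2_def by auto
  next
    case False
    then have hl: "Hf a < u" using lt unfolding h2_def by auto
    have "Hf x0 \<le> Hf a" using Hf_mono[of x0 a] x0 a False by auto
    then have ub: "Hf x0 < u" "x0 < u" using hl b by auto
    then have k: "k2 x0 u = hinv u" unfolding k2_def by auto
    have hu: "hinv u \<in> {x0..1}" "Hf (hinv u) = u" using hh[of u] ub u by auto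
    show ?thesis using Hf_less_imp[of a "hinv u"] False x0 a hu k hl by auto
  qed
  show "k2 x0 u \<le> a" if a: "a\<in>{0..1}" and u: "u\<in>{0..1}" and lt: "u < h2 x0 a" for a u
  proof (cases "a < x0")
    case True
    then show ?thesis using lt unfolding h2_def k2_def by auto
  next
    case False
    then have hl: "u < Hf a" using lt unfolding h2_def by auto
    show ?thesis
    proof (cases "u \<le> Hf x0")
      case True then show ?thesis using False unfolding k2_def by auto
    next
      case ub: False
      then have k: "k2 x0 u = hinv u" using b unfolding k2_def by auto
      have hu: "hinv u \<in> {x0..1}" "Hf (hinv u) = u" using hh[of u] ub u by auto
      show ?thesis using Hf_less_imp[of "hinv u" a] False x0 a hu k hl by auto
    qed
  qed
qed

lemma case2_eq:
  assumes x0: "0 < x0" "x0 \<le> 1" and f00: "f (0,0) = 0"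
  shows "\<And>a. a\<in>{0..x0} \<Longrightarrow> f (a, a) = integral {0..a} (\<lambda>s. f1 (s, h2 x0 s)) + integral {0..a} (\<lambda>u. f2 (k2 x0 u, u))"
  and "\<And>a. a\<in>{0..1} \<Longrightarrow> f (a, h2 x0 a) = integral {0..a} (\<lambda>s. f1 (s, h2 x0 s)) + integral {0..h2 x0 a} (\<lambda>u. f2 (k2 x0 u, u))"
proof -
  note C = case2_chain[OF x0]
  have b: "x0 \<le> Hf x0" "Hf x0 \<le> 1" using Hf_range[OF x0] by auto
  have cint: "(\<lambda>s. f1 (s, h2 x0 s)) integrable_on {0..1}"
    by (rule int_anti) (rule chain_anti(1)[OF C(1-4)], auto)
  have dint: "(\<lambda>u. f2 (k2 x0 u, u)) integrable_on {0..1}"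
    by (rule int_anti) (rule chain_anti(2)[OF C(1-4)], auto)
  have diag: "f (a, a) = integral {0..a} (\<lambda>s. f1 (s, h2 x0 s)) + integral {0..a} (\<lambda>u. f2 (k2 x0 u, u))"
    if a: "a\<in>{0..x0}" for a
  proof -
    have dsub: "(\<lambda>s. (s, s)) ` {0..a} \<subseteq> sq" using a x0 by (auto simp: sq_def)
    have i1: "(\<lambda>s. f1 (s, s)) integrable_on {0..a}"
      by (rule integrable_continuous_interval, rule continuous_on_compose2[OF cont_f1 _ dsub])
         (intro continuous_intros)
    have i2: "(\<lambda>s. f2 (s, s)) integrable_on {0..a}"
      by (rule integrable_continuous_interval, rule continuous_on_compose2[OF cont_f2 _ dsub])
         (intro continuous_intros)
    have e1: "integral {0..a} (\<lambda>s. f1 (s, h2 x0 s)) = integral {0..a} (\<lambda>s. f1 (s, s))"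
      by (rule integral_spike[of "{x0}"]) (use a in \<open>auto simp: h2_def\<close>)
    have e2: "integral {0..a} (\<lambda>u. f2 (k2 x0 u, u)) = integral {0..a} (\<lambda>s. f2 (s, s))"
      by (rule integral_cong) (use a in \<open>auto simp: k2_def\<close>)
    have "integral {0..a} (\<lambda>s. f1 (s, s)) + integral {0..a} (\<lambda>s. f2 (s, s))
        = integral {0..a} (\<lambda>s. f1 (s, s) + f2 (s, s))"
      by (rule integral_add[symmetric, OF i1 i2])
    also have "\<dots> = f (a, a) - f (0, 0)" by (rule integral_unique, rule ftc_diag) (use a x0 in auto)
    finally show ?thesis using e1 e2 f00 by simp
  qed
  show "\<And>a. a\<in>{0..x0} \<Longrightarrow> f (a, a) = integral {0..a} (\<lambda>s. f1 (s, h2 x0 s)) + integral {0..a} (\<lambda>u. f2 (k2 x0 u, u))"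
    using diag by blast
  have vert: "f (x0, Hf x0) = integral {0..x0} (\<lambda>s. f1 (s, h2 x0 s)) + integral {0..Hf x0} (\<lambda>u. f2 (k2 x0 u, u))"
  proof -
    have iD: "(\<lambda>u. f2 (k2 x0 u, u)) integrable_on {0..Hf x0}"
      by (rule integrable_subinterval_real[OF dint]) (use b in auto)
    have cmb: "integral {0..Hf x0} (\<lambda>u. f2 (k2 x0 u, u)) = integral {0..x0} (\<lambda>u. f2 (k2 x0 u, u)) + integral {x0..Hf x0} (\<lambda>u. f2 (k2 x0 u, u))"
      using Henstock_Kurzweil_Integration.integral_combine[OF _ b(1) iD] x0 by auto
    have "integral {x0..Hf x0} (\<lambda>u. f2 (k2 x0 u, u)) = integral {x0..Hf x0} (\<lambda>s. f2 (x0, s))"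
      by (rule integral_cong) (auto simp: k2_def)
    also have "\<dots> = f (x0, Hf x0) - f (x0, x0)" by (rule integral_unique, rule ftc_vert) (use b x0 in auto)
    finally show ?thesis using cmb diag[of x0] x0 by simp
  qed
  show "f (a, h2 x0 a) = integral {0..a} (\<lambda>s. f1 (s, h2 x0 s)) + integral {0..h2 x0 a} (\<lambda>u. f2 (k2 x0 u, u))"
    if a: "a\<in>{0..1}" for a
  proof (cases "a < x0")
    case True then show ?thesis using diag[of a] a unfolding h2_def by auto
  next
    case False
    have cc: "f (a, Hf a) - integral {0..a} (\<lambda>s. f1 (s, h2 x0 s)) - integral {0..Hf a} (\<lambda>u. f2 (k2 x0 u, u))
     = f (x0, Hf x0) - integral {0..x0} (\<lambda>s. f1 (s, h2 x0 s)) - integral {0..Hf x0} (\<lambda>u. f2 (k2 x0 u, u))"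
      by (rule curve_const[OF x0 _ _ cint dint]) (use a False b in \<open>auto simp: h2_def k2_def\<close>)
    then show ?thesis using vert False unfolding h2_def by auto
  qed
qed

end

context drf begin

lemma assemble:
  fixes h k \<gamma>1 \<gamma>2 :: "real \<Rightarrow> real" and lam a b :: "'i \<Rightarrow> real"
  assumes hr: "\<And>x. x\<in>{0..1} \<Longrightarrow> h x \<in> {0..1}" and kr: "\<And>u. u\<in>{0..1} \<Longrightarrow> k u \<in> {0..1}"
  and hm: "\<And>x y. x\<in>{0..1} \<Longrightarrow> y\<in>{0..1} \<Longrightarrow> x \<le> y \<Longrightarrow> h x \<le> h y"
  and km: "\<And>x y. x\<in>{0..1} \<Longrightarrow> y\<in>{0..1} \<Longrightarrow> x \<le> y \<Longrightarrow> k x \<le> k y"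
  and il1: "\<And>a u. a\<in>{0..1} \<Longrightarrow> u\<in>{0..1} \<Longrightarrow> h a < u \<Longrightarrow> a \<le> k u"
  and il2: "\<And>a u. a\<in>{0..1} \<Longrightarrow> u\<in>{0..1} \<Longrightarrow> u < h a \<Longrightarrow> k u \<le> a"
  and ch: "\<And>a. a\<in>{0..1} \<Longrightarrow> f (a, h a) = integral {0..a} (\<lambda>s. f1 (s, h s)) + integral {0..h a} (\<lambda>u. f2 (k u, u))"
  and fin: "finite I" and pos: "\<forall>i\<in>I. lam i > 0"
  and a01: "\<forall>i\<in>I. a i \<in> {0..1}" and b01: "\<forall>i\<in>I. b i \<in> {0..1}"
  and g1: "\<forall>t\<in>{0..sum lam I}. \<gamma>1 t \<in> {0..1}" and g2: "\<forall>t\<in>{0..sum lam I}. \<gamma>2 t \<in> {0..1}"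
  and i11: "(\<lambda>t. integral {0..\<gamma>1 t} (\<lambda>s. f1 (s, h s))) integrable_on {0..sum lam I}"
  and i12: "\<gamma>1 integrable_on {0..sum lam I}"
  and i21: "(\<lambda>t. integral {0..\<gamma>2 t} (\<lambda>u. f2 (k u, u))) integrable_on {0..sum lam I}"
  and i22: "\<gamma>2 integrable_on {0..sum lam I}"
  and sub1: "\<forall>S\<subseteq>I. (\<Sum>i\<in>S. lam i * a i) \<le> integral {0..sum lam S} \<gamma>1"
  and eq1: "(\<Sum>i\<in>I. lam i * a i) = integral {0..sum lam I} \<gamma>1"
  and sub2: "\<forall>S\<subseteq>I. (\<Sum>i\<in>S. lam i * b i) \<le> integral {0..sum lam S} \<gamma>2"
  and eq2: "(\<Sum>i\<in>I. lam i * b i) = integral {0..sum lam I} \<gamma>2"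
  shows "integral {0..sum lam I} (\<lambda>t. integral {0..\<gamma>1 t} (\<lambda>s. f1 (s, h s)))
       + integral {0..sum lam I} (\<lambda>t. integral {0..\<gamma>2 t} (\<lambda>u. f2 (k u, u)))
     \<le> (\<Sum>i\<in>I. lam i * f (a i, b i))"
proof -
  let ?c = "\<lambda>s. f1 (s, h s)" and ?d = "\<lambda>u. f2 (k u, u)"
  have ca: "\<And>x y. x\<in>{0..1} \<Longrightarrow> y\<in>{0..1} \<Longrightarrow> x \<le> y \<Longrightarrow> ?c y \<le> ?c x"
    by (rule chain_anti(1)[OF hr kr hm km])
  have da: "\<And>x y. x\<in>{0..1} \<Longrightarrow> y\<in>{0..1} \<Longrightarrow> x \<le> y \<Longrightarrow> ?d y \<le> ?d x"
    by (rule chain_anti(2)[OF hr kr hm km])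
  have A: "integral {0..sum lam I} (\<lambda>t. integral {0..\<gamma>1 t} ?c) \<le> (\<Sum>i\<in>I. lam i * integral {0..a i} ?c)"
    by (rule oneD[OF fin pos a01 _ _ g1 i11 i12 sub1 eq1, of ?c]) (use superdiff[where c="?c", OF ca] ca in auto)
  have B: "integral {0..sum lam I} (\<lambda>t. integral {0..\<gamma>2 t} ?d) \<le> (\<Sum>i\<in>I. lam i * integral {0..b i} ?d)"
    by (rule oneD[OF fin pos b01 _ _ g2 i21 i22 sub2 eq2, of ?d]) (use superdiff[where c="?d", OF da] da in auto)
  have C: "(\<Sum>i\<in>I. lam i * integral {0..a i} ?c) + (\<Sum>i\<in>I. lam i * integral {0..b i} ?d)
      \<le> (\<Sum>i\<in>I. lam i * f (a i, b i))"
    unfolding sum.distrib[symmetric] distrib_left[symmetric]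
  proof (rule sum_mono)
    fix i assume i: "i \<in> I"
    have "integral {0..a i} ?c + integral {0..b i} ?d \<le> f (a i, b i)"
      by (rule cert_from_chain[OF hr kr hm km il1 il2 ch]) (use i a01 b01 in auto)
    then show "lam i * (integral {0..a i} ?c + integral {0..b i} ?d) \<le> lam i * f (a i, b i)"
      using pos i by (intro mult_left_mono) auto
  qed
  show ?thesis using A B C by linarith
qed

end

lemma P0_eq: "poissonP 0 l = exp (- l)" by (simp add: poissonP_def)
lemma P1_eq: "poissonP 1 l = exp (- l) * (1 + l)" by (simp add: poissonP_def)

lemma int_exp: "(u::real) \<le> v \<Longrightarrow> ((\<lambda>t. exp (- t)) has_integral (exp (- u) - exp (- v))) {u..v}"
proof -
  assume uv: "u \<le> v"
  have "((\<lambda>t. exp (- t)) has_integral ((\<lambda>t. - exp (- t)) v - (\<lambda>t. - exp (- t)) u)) {u..v}"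
    by (rule fundamental_theorem_of_calculus[OF uv])
       (auto intro!: derivative_eq_intros simp: has_real_derivative_iff_has_vector_derivative[symmetric])
  then show ?thesis by simp
qed

lemma int_p1: "(u::real) \<le> v \<Longrightarrow> ((\<lambda>t. exp (- t) * (1 + t)) has_integral (exp (- u) * (2 + u) - exp (- v) * (2 + v))) {u..v}"
proof -
  assume uv: "u \<le> v"
  have "((\<lambda>t. exp (- t) * (1 + t)) has_integral ((\<lambda>t. - exp (- t) * (2 + t)) v - (\<lambda>t. - exp (- t) * (2 + t)) u)) {u..v}"
    by (rule fundamental_theorem_of_calculus[OF uv])
       (auto intro!: derivative_eq_intros simp: has_real_derivative_iff_has_vector_derivative[symmetric] algebra_simps)
  then show ?thesis by simp
qed

definition Gp :: "real \<Rightarrow> real" where "Gp t = 2 - exp (- t) * (2 + t)"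

lemma Gp_strict: assumes "0 \<le> s" "s < t" shows "Gp s < Gp t"
proof -
  have "\<And>z. s \<le> z \<Longrightarrow> z \<le> t \<Longrightarrow> DERIV Gp z :> exp (- z) * (1 + z)"
    unfolding Gp_def by (auto intro!: derivative_eq_intros simp: algebra_simps)
  from MVT2[OF assms(2) this] obtain z where z: "s < z" "z < t" "Gp t - Gp s = (t - s) * (exp (- z) * (1 + z))" by auto
  have "(t - s) * (exp (- z) * (1 + z)) > 0" using z assms by (intro mult_pos_pos) auto
  then show ?thesis using z by linarith
qed

lemma Gp_mono: "0 \<le> s \<Longrightarrow> s \<le> t \<Longrightarrow> Gp s \<le> Gp t"
  using Gp_strict[of s t] by (cases "s = t") auto

lemma pw_int:
  fixes F g :: "real \<Rightarrow> real"
  assumes "continuous_on {u..v} g" "\<And>t. u < t \<Longrightarrow> t < v \<Longrightarrow> F t = g t"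
  shows "F integrable_on {u..v}"
proof -
  have "g integrable_on {u..v}" by (rule integrable_continuous_interval[OF assms(1)])
  then show ?thesis using integrable_spike_finite[of "{u,v}" "{u..v}" F g] assms(2) by force
qed

lemma pw_integral:
  fixes F g :: "real \<Rightarrow> real"
  assumes "\<And>t. u < t \<Longrightarrow> t < v \<Longrightarrow> F t = g t"
  shows "integral {u..v} F = integral {u..v} g"
  by (rule integral_spike[of "{u,v}"]) (use assms in \<open>auto intro: negligible_finite\<close>)

lemma exp_range: "0 \<le> (t::real) \<Longrightarrow> exp (- t) \<in> {0<..1}" by auto

lemma Hf_exp_range: "0 \<le> (t::real) \<Longrightarrow> exp (- t) * (1 + t) \<in> {0<..1}"
  using Hf_range[of "exp (- t)"] Hf_exp[of t] by auto


lemma g_facts: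
  fixes q Q :: "real \<Rightarrow> real" and l L :: real
  assumes l: "0 \<le> l" "l \<le> L"
  and qc: "continuous_on {0..l} q" and q01: "\<And>t. 0 \<le> t \<Longrightarrow> q t \<in> {0..1}"
  and qi: "\<And>u v. 0 \<le> u \<Longrightarrow> u \<le> v \<Longrightarrow> (q has_integral (Q v - Q u)) {u..v}"
  shows "\<forall>t\<in>{0..L}. (if t \<le> l then q t else 0) \<in> {0..1}"
  and "(\<lambda>t. if t \<le> l then q t else 0) integrable_on {0..L}"
  and "\<And>\<mu>. \<mu>\<in>{0..L} \<Longrightarrow> integral {0..\<mu>} (\<lambda>t. if t \<le> l then q t else 0) = Q (min \<mu> l) - Q 0"
  and "\<And>\<phi>::real\<Rightarrow>real. continuous_on {0..1} \<phi> \<Longrightarrow> (\<lambda>t. \<phi> (if t \<le> l then q t else 0)) integrable_on {0..L}"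
proof -
  let ?g = "\<lambda>t. if t \<le> l then q t else 0"
  show "\<forall>t\<in>{0..L}. ?g t \<in> {0..1}" using q01 by auto
  have hi: "\<And>\<mu>. \<mu>\<in>{0..L} \<Longrightarrow> (?g has_integral (Q (min \<mu> l) - Q 0)) {0..\<mu>}"
  proof -
    fix \<mu> assume m: "\<mu> \<in> {0..L}"
    show "(?g has_integral (Q (min \<mu> l) - Q 0)) {0..\<mu>}"
    proof (cases "\<mu> \<le> l")
      case True
      have "(q has_integral (Q \<mu> - Q 0)) {0..\<mu>}" using qi[of 0 \<mu>] m by auto
      then have "(?g has_integral (Q \<mu> - Q 0)) {0..\<mu>}" by (rule has_integral_eq[rotated]) (use True in auto)
      then show ?thesis using True by simp
    next
      case False
      have a1: "(?g has_integral (Q l - Q 0)) {0..l}"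
        using qi[of 0 l] l by (rule_tac has_integral_eq[rotated]) auto
      have a2: "(?g has_integral 0) {l..\<mu>}"
        by (rule has_integral_spike_finite[of "{l}", OF _ _ has_integral_0]) auto
      have "(?g has_integral (Q l - Q 0 + 0)) {0..\<mu>}"
        by (rule has_integral_combine[OF _ _ a1 a2]) (use l False in auto)
      then show ?thesis using False by simp
    qed
  qed
  then show "\<And>\<mu>. \<mu>\<in>{0..L} \<Longrightarrow> integral {0..\<mu>} ?g = Q (min \<mu> l) - Q 0"
    by (simp add: integral_unique)
  show "?g integrable_on {0..L}" using hi[of L] l by auto
  show "(\<lambda>t. \<phi> (?g t)) integrable_on {0..L}" if pc: "continuous_on {0..1} \<phi>" for \<phi> :: "real \<Rightarrow> real"
  proof (rule Henstock_Kurzweil_Integration.integrable_combine[where a=0 and c=l and b=L])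
    show "0 \<le> l" "l \<le> L" using l by auto
    have sub: "q ` {0..l} \<subseteq> {0..1}" using q01 by force
    have "continuous_on {0..l} (\<lambda>t. \<phi> (q t))"
      by (rule continuous_on_compose2[OF pc qc sub])
    then show "(\<lambda>t. \<phi> (?g t)) integrable_on {0..l}" by (rule pw_int) simp
    show "(\<lambda>t. \<phi> (?g t)) integrable_on {l..L}"
      by (rule pw_int[of _ _ "\<lambda>_. \<phi> 0"]) (simp_all add: continuous_on_const)
  qed
qed


lemma g2c2_facts:
  fixes l1 l2 L :: real
  assumes l: "0 \<le> l2" "l2 < l1" "l1 \<le> L"
  defines "g \<equiv> \<lambda>t. if t \<le> l2 then exp (- t) * (1 + t) else if t \<le> l1 then exp (- t) else 0"
  shows "\<forall>t\<in>{0..L}. g t \<in> {0..1}"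
  and "g integrable_on {0..L}"
  and "\<And>\<mu>. \<mu>\<in>{0..L} \<Longrightarrow> integral {0..\<mu>} g = (if \<mu> \<le> l2 then Gp \<mu> else Gp l2 + exp (- l2) - exp (- min \<mu> l1))"
  and "\<And>\<phi>::real\<Rightarrow>real. continuous_on {0..1} \<phi> \<Longrightarrow> (\<lambda>t. \<phi> (g t)) integrable_on {0..L}"
proof -
  show "\<forall>t\<in>{0..L}. g t \<in> {0..1}"
  proof
    fix t :: real assume t: "t \<in> {0..L}"
    show "g t \<in> {0..1}" using Hf_exp_range[of t] exp_range[of t] t unfolding g_def by auto
  qed
  have hi: "(g has_integral (if \<mu> \<le> l2 then Gp \<mu> else Gp l2 + exp (- l2) - exp (- min \<mu> l1))) {0..\<mu>}"
    if m: "\<mu> \<in> {0..L}" for \<mu>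
  proof (cases "\<mu> \<le> l2")
    case True
    have "((\<lambda>t. exp (- t) * (1 + t)) has_integral (Gp \<mu>)) {0..\<mu>}"
      using int_p1[of 0 \<mu>] m unfolding Gp_def by auto
    then have "(g has_integral (Gp \<mu>)) {0..\<mu>}" by (rule has_integral_eq[rotated]) (use True in \<open>auto simp: g_def\<close>)
    then show ?thesis using True by simp
  next
    case False
    define m' where "m' = min \<mu> l1"
    have m'': "l2 \<le> m'" "m' \<le> \<mu>" using False l unfolding m'_def by auto
    have a1: "(g has_integral Gp l2) {0..l2}"
      using int_p1[of 0 l2] l unfolding Gp_def by (rule_tac has_integral_eq[rotated]) (auto simp: g_def)
    have a2: "(g has_integral (exp (- l2) - exp (- m'))) {l2..m'}"
      by (rule has_integral_spike_finite[of "{l2}", OF _ _ int_exp[OF m''(1)]])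
         (auto simp: g_def m'_def)
    have a3: "(g has_integral 0) {m'..\<mu>}"
      by (rule has_integral_spike_finite[of "{m'}", OF _ _ has_integral_0]) (use l in \<open>auto simp: g_def m'_def\<close>)
    have a12: "(g has_integral (Gp l2 + (exp (- l2) - exp (- m')))) {0..m'}"
      by (rule has_integral_combine[OF _ _ a1 a2]) (use l m'' in auto)
    have "(g has_integral (Gp l2 + (exp (- l2) - exp (- m')) + 0)) {0..\<mu>}"
      by (rule has_integral_combine[OF _ _ a12 a3]) (use l m'' in auto)
    then show ?thesis using False unfolding m'_def by (simp add: algebra_simps)
  qed
  then show "\<And>\<mu>. \<mu>\<in>{0..L} \<Longrightarrow> integral {0..\<mu>} g = (if \<mu> \<le> l2 then Gp \<mu> else Gp l2 + exp (- l2) - exp (- min \<mu> l1))"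
    by (simp add: integral_unique)
  show "g integrable_on {0..L}" using hi[of L] l by auto
  show "(\<lambda>t. \<phi> (g t)) integrable_on {0..L}" if pc: "continuous_on {0..1} \<phi>" for \<phi> :: "real \<Rightarrow> real"
  proof (rule Henstock_Kurzweil_Integration.integrable_combine[where a=0 and c=l1 and b=L])
    show "0 \<le> l1" "l1 \<le> L" using l by auto
    show "(\<lambda>t. \<phi> (g t)) integrable_on {l1..L}"
      by (rule pw_int[of _ _ "\<lambda>_. \<phi> 0"]) (use l in \<open>simp_all add: continuous_on_const g_def\<close>)
    show "(\<lambda>t. \<phi> (g t)) integrable_on {0..l1}"
    proof (rule Henstock_Kurzweil_Integration.integrable_combine[where a=0 and c=l2 and b=l1])
      show "0 \<le> l2" "l2 \<le> l1" using l by auto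
      have sub: "(\<lambda>t. exp (- t) * (1 + t)) ` {0..l2} \<subseteq> {0..1}" using Hf_exp_range by force
      have "continuous_on {0..l2} (\<lambda>t. \<phi> (exp (- t) * (1 + t)))"
        by (rule continuous_on_compose2[OF pc _ sub]) (intro continuous_intros)
      then show "(\<lambda>t. \<phi> (g t)) integrable_on {0..l2}" by (rule pw_int) (simp add: g_def)
      have sub2: "(\<lambda>t. exp (- t)) ` {l2..l1} \<subseteq> {0..1}" using l by force
      have "continuous_on {l2..l1} (\<lambda>t. \<phi> (exp (- t)))"
        by (rule continuous_on_compose2[OF pc _ sub2]) (intro continuous_intros)
      then show "(\<lambda>t. \<phi> (g t)) integrable_on {l2..l1}" by (rule pw_int) (use l in \<open>simp add: g_def\<close>)
    qed
  qed
qed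


context drf begin

lemma case1_main:
  fixes lam a b :: "'i \<Rightarrow> real" and l1 l2 :: real
  assumes f00: "f (0,0) = 0" and fin: "finite I" and pos: "\<forall>i\<in>I. lam i > 0"
  and a01: "\<forall>i\<in>I. a i \<in> {0..1}" and b01: "\<forall>i\<in>I. b i \<in> {0..1}"
  and l: "0 \<le> l1" "l1 \<le> l2"
  and PA: "\<forall>S\<subseteq>I. (\<Sum>i\<in>S. lam i * a i) \<le> 1 - exp (- sum lam S)"
  and XA: "(\<Sum>i\<in>I. lam i * a i) = 1 - exp (- l1)"
  and PB: "\<forall>S\<subseteq>I. (\<Sum>i\<in>S. lam i * b i) \<le> Gp (sum lam S)"
  and XB: "(\<Sum>i\<in>I. lam i * b i) = Gp l2"
  shows "integral {0..l1} (\<lambda>l. f (exp (-l), exp (-l) * (1 + l))) + integral {l1..l2} (\<lambda>l. f (0, exp (-l) * (1 + l)))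
     \<le> (\<Sum>i\<in>I. lam i * f (a i, b i))"
proof -
  define L where "L = sum lam I"
  have lamS: "0 \<le> sum lam S" if "S \<subseteq> I" for S using pos that by (intro sum_nonneg) force
  have LS: "sum lam S \<le> L" if "S \<subseteq> I" for S
    unfolding L_def using pos that fin by (intro sum_mono2) auto
  have TA: "(\<Sum>i\<in>S. lam i * a i) \<le> (\<Sum>i\<in>I. lam i * a i)" if "S \<subseteq> I" for S
    using pos a01 that fin by (intro sum_mono2) auto
  have TB: "(\<Sum>i\<in>S. lam i * b i) \<le> (\<Sum>i\<in>I. lam i * b i)" if "S \<subseteq> I" for S
    using pos b01 that fin by (intro sum_mono2) auto
  have l1L: "l1 \<le> L"
  proof -
    have "1 - exp (- l1) \<le> 1 - exp (- L)" using PA XA unfolding L_def by auto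
    then show ?thesis by simp
  qed
  have l2L: "l2 \<le> L"
  proof (rule ccontr)
    assume "\<not> l2 \<le> L"
    then have "Gp L < Gp l2" using Gp_strict[of L l2] lamS[of I] unfolding L_def by auto
    moreover have "Gp l2 \<le> Gp L" using PB XB unfolding L_def by auto
    ultimately show False by simp
  qed
  define x0 where "x0 = exp (- l1)"
  have x0: "0 < x0" "x0 \<le> 1" unfolding x0_def using l by auto
  define \<gamma>1 where "\<gamma>1 = (\<lambda>t::real. if t \<le> l1 then exp (- t) else 0)"
  define \<gamma>2 where "\<gamma>2 = (\<lambda>t::real. if t \<le> l2 then exp (- t) * (1 + t) else 0)"
  note G1 = g_facts[of l1 L "\<lambda>t. exp (- t)" "\<lambda>t. - exp (- t)", OF l(1) l1L, folded \<gamma>1_def]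
  note G2 = g_facts[of l2 L "\<lambda>t. exp (- t) * (1 + t)" "\<lambda>t. - exp (- t) * (2 + t)", OF _ l2L, folded \<gamma>2_def]
  have c1: "continuous_on {0..l1} (\<lambda>t. exp (- t))" by (intro continuous_intros)
  have c2: "continuous_on {0..l2} (\<lambda>t. exp (- t) * (1 + t))" by (intro continuous_intros)
  have q1: "exp (- t) \<in> {0..1}" if "0 \<le> t" for t :: real using exp_range[OF that] by auto
  have q2: "exp (- t) * (1 + t) \<in> {0..1}" if "0 \<le> t" for t :: real using Hf_exp_range[OF that] by auto
  have qi1: "((\<lambda>t. exp (- t)) has_integral ((- exp (- v)) - (- exp (- u)))) {u..v}"
    if "0 \<le> u" "u \<le> v" for u v :: real using int_exp[OF that(2)] by simp
  have qi2: "((\<lambda>t. exp (- t) * (1 + t)) has_integral ((- exp (- v) * (2 + v)) - (- exp (- u) * (2 + u)))) {u..v}"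
    if "0 \<le> u" "u \<le> v" for u v :: real using int_p1[OF that(2)] by simp
  note G1 = G1[OF c1 q1 qi1] and G2 = G2[OF _ c2 q2 qi2]
  have G2' : "\<forall>t\<in>{0..L}. \<gamma>2 t \<in> {0..1}" "\<gamma>2 integrable_on {0..L}"
    "\<And>\<mu>. \<mu>\<in>{0..L} \<Longrightarrow> integral {0..\<mu>} \<gamma>2 = Gp (min \<mu> l2)"
    "\<And>\<phi>::real\<Rightarrow>real. continuous_on {0..1} \<phi> \<Longrightarrow> (\<lambda>t. \<phi> (\<gamma>2 t)) integrable_on {0..L}"
    using G2 l by (auto simp: Gp_def \<gamma>2_def)
  have G1' : "\<forall>t\<in>{0..L}. \<gamma>1 t \<in> {0..1}" "\<gamma>1 integrable_on {0..L}"
    "\<And>\<mu>. \<mu>\<in>{0..L} \<Longrightarrow> integral {0..\<mu>} \<gamma>1 = 1 - exp (- min \<mu> l1)"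
    "\<And>\<phi>::real\<Rightarrow>real. continuous_on {0..1} \<phi> \<Longrightarrow> (\<lambda>t. \<phi> (\<gamma>1 t)) integrable_on {0..L}"
    using G1 by (auto simp: \<gamma>1_def)
  note C = case1_chain[OF x0 f00]
  note CE = case1_eq[OF x0 f00]
  let ?c = "\<lambda>s. f1 (s, h1 x0 s)" and ?d = "\<lambda>u. f2 (k1 x0 u, u)"
  have cint: "?c integrable_on {0..1}"
    by (rule int_anti) (rule chain_anti(1)[OF C(1-4)], auto)
  have dint: "?d integrable_on {0..1}"
    by (rule int_anti) (rule chain_anti(2)[OF C(1-4)], auto)
  have phic: "continuous_on {0..1} (\<lambda>x. integral {0..x} ?c)" by (rule indefinite_integral_continuous_1[OF cint])
  have psic: "continuous_on {0..1} (\<lambda>x. integral {0..x} ?d)" by (rule indefinite_integral_continuous_1[OF dint])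
  have sub1: "\<forall>S\<subseteq>I. (\<Sum>i\<in>S. lam i * a i) \<le> integral {0..sum lam S} \<gamma>1"
  proof (intro allI impI)
    fix S assume S: "S \<subseteq> I"
    have "integral {0..sum lam S} \<gamma>1 = 1 - exp (- min (sum lam S) l1)"
      using G1'(3) lamS[OF S] LS[OF S] by auto
    then show "(\<Sum>i\<in>S. lam i * a i) \<le> integral {0..sum lam S} \<gamma>1"
      using PA S TA[OF S] XA by (cases "sum lam S \<le> l1") auto
  qed
  have eq1: "(\<Sum>i\<in>I. lam i * a i) = integral {0..sum lam I} \<gamma>1"
    using G1'(3)[of L] l1L lamS[of I] XA unfolding L_def by auto
  have sub2: "\<forall>S\<subseteq>I. (\<Sum>i\<in>S. lam i * b i) \<le> integral {0..sum lam S} \<gamma>2"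
  proof (intro allI impI)
    fix S assume S: "S \<subseteq> I"
    have "integral {0..sum lam S} \<gamma>2 = Gp (min (sum lam S) l2)"
      using G2'(3) lamS[OF S] LS[OF S] by auto
    then show "(\<Sum>i\<in>S. lam i * b i) \<le> integral {0..sum lam S} \<gamma>2"
      using PB S TB[OF S] XB by (cases "sum lam S \<le> l2") auto
  qed
  have eq2: "(\<Sum>i\<in>I. lam i * b i) = integral {0..sum lam I} \<gamma>2"
    using G2'(3)[of L] l2L lamS[of I] XB unfolding L_def by auto
  have main: "integral {0..L} (\<lambda>t. integral {0..\<gamma>1 t} ?c) + integral {0..L} (\<lambda>t. integral {0..\<gamma>2 t} ?d)
     \<le> (\<Sum>i\<in>I. lam i * f (a i, b i))"
    unfolding L_def
    by (rule assemble[OF C CE(2) fin pos a01 b01 _ _ _ _ _ _ sub1 eq1 sub2 eq2])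
       (use G1' G2' phic psic in \<open>auto simp: L_def\<close>)
  define F where "F = (\<lambda>t. f (\<gamma>1 t, \<gamma>2 t))"
  have pw: "F t = integral {0..\<gamma>1 t} ?c + integral {0..\<gamma>2 t} ?d" if t: "t \<in> {0..L}" for t
  proof (cases "t \<le> l1")
    case True
    define y where "y = exp (- t)"
    have y: "x0 \<le> y" "y \<le> 1" "0 < y" unfolding y_def x0_def using True t by auto
    have hy: "h1 x0 y = Hf y" using y unfolding h1_def by auto
    have "\<gamma>1 t = y" "\<gamma>2 t = Hf y" using True l unfolding \<gamma>1_def \<gamma>2_def y_def by (auto simp: Hf_exp)
    then show ?thesis using CE(2)[of y] y hy unfolding F_def by auto
  next
    case False
    show ?thesis
    proof (cases "t \<le> l2")
      case True
      have "Hf (exp (- t)) \<le> Hf x0" using Hf_mono[of "exp (- t)" x0] False x0 unfolding x0_def by auto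
      moreover have "0 \<le> Hf (exp (- t))" using Hf_exp_range[of t] t Hf_exp[of t] by auto
      ultimately have "f (0, \<gamma>2 t) = integral {0..0} ?c + integral {0..\<gamma>2 t} ?d"
        using CE(1)[of "\<gamma>2 t"] True unfolding \<gamma>2_def by (auto simp: Hf_exp)
      then show ?thesis using False unfolding F_def \<gamma>1_def by auto
    next
      case False2: False
      have "f (0, 0) = integral {0..0} ?c + integral {0..0} ?d" using CE(1)[of 0] x0 Hf_range[OF x0] by auto
      then show ?thesis using False False2 unfolding F_def \<gamma>1_def \<gamma>2_def by auto
    qed
  qed
  have i1: "(\<lambda>t. integral {0..\<gamma>1 t} ?c) integrable_on {0..L}" using G1'(4)[OF phic] .
  have i2: "(\<lambda>t. integral {0..\<gamma>2 t} ?d) integrable_on {0..L}" using G2'(4)[OF psic] .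
  have sumF: "integral {0..L} (\<lambda>t. integral {0..\<gamma>1 t} ?c) + integral {0..L} (\<lambda>t. integral {0..\<gamma>2 t} ?d)
      = integral {0..L} F"
  proof -
    have "integral {0..L} (\<lambda>t. integral {0..\<gamma>1 t} ?c + integral {0..\<gamma>2 t} ?d) = integral {0..L} F"
      by (rule integral_cong) (use pw in simp)
    then show ?thesis using integral_add[OF i1 i2] by simp
  qed
  have iF: "F integrable_on {0..L}"
  proof (rule integrable_eq[OF Henstock_Kurzweil_Integration.integrable_add[OF i1 i2]])
    fix t assume "t \<in> {0..L}" then show "integral {0..\<gamma>1 t} ?c + integral {0..\<gamma>2 t} ?d = F t" using pw by simp
  qed
  have iF2: "F integrable_on {0..l2}" by (rule integrable_subinterval_real[OF iF]) (use l2L in auto)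
  have spl: "integral {0..L} F = integral {0..l1} F + integral {l1..l2} F + integral {l2..L} F"
    using Henstock_Kurzweil_Integration.integral_combine[OF _ l2L iF]
      Henstock_Kurzweil_Integration.integral_combine[OF _ l(2) iF2] l by auto
  have p1: "integral {0..l1} F = integral {0..l1} (\<lambda>l. f (exp (-l), exp (-l) * (1 + l)))"
    by (rule integral_cong) (use l in \<open>auto simp: F_def \<gamma>1_def \<gamma>2_def\<close>)
  have p2: "integral {l1..l2} F = integral {l1..l2} (\<lambda>l. f (0, exp (-l) * (1 + l)))"
    by (rule pw_integral) (auto simp: F_def \<gamma>1_def \<gamma>2_def)
  have p3: "integral {l2..L} F = integral {l2..L} (\<lambda>_. 0)"
    by (rule pw_integral) (use l f00 in \<open>auto simp: F_def \<gamma>1_def \<gamma>2_def\<close>)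
  show ?thesis using main sumF spl p1 p2 p3 by simp
qed

lemma case2_main:
  fixes lam a b :: "'i \<Rightarrow> real" and l1 l2 :: real
  assumes f00: "f (0,0) = 0" and fin: "finite I" and pos: "\<forall>i\<in>I. lam i > 0"
  and a01: "\<forall>i\<in>I. a i \<in> {0..1}" and b01: "\<forall>i\<in>I. b i \<in> {0..1}"
  and l: "0 \<le> l2" "l2 < l1"
  and PA: "\<forall>S\<subseteq>I. (\<Sum>i\<in>S. lam i * a i) \<le> 1 - exp (- sum lam S)"
  and XA: "(\<Sum>i\<in>I. lam i * a i) = 1 - exp (- l1)"
  and PB: "\<forall>S\<subseteq>I. (\<Sum>i\<in>S. lam i * b i) \<le> Gp (sum lam S)"
  and PB2: "\<forall>S\<subseteq>I. (\<Sum>i\<in>S. lam i * b i) \<le> (1 - exp (- sum lam S)) + (1 - exp (- l2) * (1 + l2))"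
  and XB: "(\<Sum>i\<in>I. lam i * b i) = (1 - exp (- l1)) + (1 - exp (- l2) * (1 + l2))"
  shows "integral {0..l2} (\<lambda>l. f (exp (-l), exp (-l) * (1 + l))) + integral {l2..l1} (\<lambda>l. f (exp (-l), exp (-l)))
     \<le> (\<Sum>i\<in>I. lam i * f (a i, b i))"
proof -
  define L where "L = sum lam I"
  have l10: "0 \<le> l1" using l by auto
  have lamS: "0 \<le> sum lam S" if "S \<subseteq> I" for S using pos that by (intro sum_nonneg) force
  have LS: "sum lam S \<le> L" if "S \<subseteq> I" for S
    unfolding L_def using pos that fin by (intro sum_mono2) auto
  have TA: "(\<Sum>i\<in>S. lam i * a i) \<le> (\<Sum>i\<in>I. lam i * a i)" if "S \<subseteq> I" for S
    using pos a01 that fin by (intro sum_mono2) auto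
  have TB: "(\<Sum>i\<in>S. lam i * b i) \<le> (\<Sum>i\<in>I. lam i * b i)" if "S \<subseteq> I" for S
    using pos b01 that fin by (intro sum_mono2) auto
  have l1L: "l1 \<le> L"
  proof -
    have "1 - exp (- l1) \<le> 1 - exp (- L)" using PA XA unfolding L_def by auto
    then show ?thesis by simp
  qed
  have l2L: "l2 \<le> L" using l1L l by auto
  define x0 where "x0 = exp (- l2)"
  have x0: "0 < x0" "x0 \<le> 1" unfolding x0_def using l by auto
  define \<gamma>1 where "\<gamma>1 = (\<lambda>t::real. if t \<le> l1 then exp (- t) else 0)"
  define \<gamma>2 where "\<gamma>2 = (\<lambda>t::real. if t \<le> l2 then exp (- t) * (1 + t) else if t \<le> l1 then exp (- t) else 0)"
  note G1 = g_facts[of l1 L "\<lambda>t. exp (- t)" "\<lambda>t. - exp (- t)", OF l10 l1L, folded \<gamma>1_def]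
  have c1: "continuous_on {0..l1} (\<lambda>t. exp (- t))" by (intro continuous_intros)
  have c2: "continuous_on {0..l2} (\<lambda>t. exp (- t) * (1 + t))" by (intro continuous_intros)
  have q1: "exp (- t) \<in> {0..1}" if "0 \<le> t" for t :: real using exp_range[OF that] by auto
  have q2: "exp (- t) * (1 + t) \<in> {0..1}" if "0 \<le> t" for t :: real using Hf_exp_range[OF that] by auto
  have qi1: "((\<lambda>t. exp (- t)) has_integral ((- exp (- v)) - (- exp (- u)))) {u..v}"
    if "0 \<le> u" "u \<le> v" for u v :: real using int_exp[OF that(2)] by simp
  have qi2: "((\<lambda>t. exp (- t) * (1 + t)) has_integral ((- exp (- v) * (2 + v)) - (- exp (- u) * (2 + u)))) {u..v}"
    if "0 \<le> u" "u \<le> v" for u v :: real using int_p1[OF that(2)] by simp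
  note G1 = G1[OF c1 q1 qi1]
  have G2' : "\<forall>t\<in>{0..L}. \<gamma>2 t \<in> {0..1}" "\<gamma>2 integrable_on {0..L}"
    "\<And>\<mu>. \<mu>\<in>{0..L} \<Longrightarrow> integral {0..\<mu>} \<gamma>2 = (if \<mu> \<le> l2 then Gp \<mu> else Gp l2 + exp (- l2) - exp (- min \<mu> l1))"
    "\<And>\<phi>::real\<Rightarrow>real. continuous_on {0..1} \<phi> \<Longrightarrow> (\<lambda>t. \<phi> (\<gamma>2 t)) integrable_on {0..L}"
    using g2c2_facts[OF l l1L] unfolding \<gamma>2_def by auto
  have G1' : "\<forall>t\<in>{0..L}. \<gamma>1 t \<in> {0..1}" "\<gamma>1 integrable_on {0..L}"
    "\<And>\<mu>. \<mu>\<in>{0..L} \<Longrightarrow> integral {0..\<mu>} \<gamma>1 = 1 - exp (- min \<mu> l1)"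
    "\<And>\<phi>::real\<Rightarrow>real. continuous_on {0..1} \<phi> \<Longrightarrow> (\<lambda>t. \<phi> (\<gamma>1 t)) integrable_on {0..L}"
    using G1 by (auto simp: \<gamma>1_def)
  note C = case2_chain[OF x0]
  note CE = case2_eq[OF x0 f00]
  let ?c = "\<lambda>s. f1 (s, h2 x0 s)" and ?d = "\<lambda>u. f2 (k2 x0 u, u)"
  have cint: "?c integrable_on {0..1}"
    by (rule int_anti) (rule chain_anti(1)[OF C(1-4)], auto)
  have dint: "?d integrable_on {0..1}"
    by (rule int_anti) (rule chain_anti(2)[OF C(1-4)], auto)
  have phic: "continuous_on {0..1} (\<lambda>x. integral {0..x} ?c)" by (rule indefinite_integral_continuous_1[OF cint])
  have psic: "continuous_on {0..1} (\<lambda>x. integral {0..x} ?d)" by (rule indefinite_integral_continuous_1[OF dint])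
  have sub1: "\<forall>S\<subseteq>I. (\<Sum>i\<in>S. lam i * a i) \<le> integral {0..sum lam S} \<gamma>1"
  proof (intro allI impI)
    fix S assume S: "S \<subseteq> I"
    have "integral {0..sum lam S} \<gamma>1 = 1 - exp (- min (sum lam S) l1)"
      using G1'(3) lamS[OF S] LS[OF S] by auto
    then show "(\<Sum>i\<in>S. lam i * a i) \<le> integral {0..sum lam S} \<gamma>1"
      using PA S TA[OF S] XA by (cases "sum lam S \<le> l1") auto
  qed
  have eq1: "(\<Sum>i\<in>I. lam i * a i) = integral {0..sum lam I} \<gamma>1"
    using G1'(3)[of L] l1L lamS[of I] XA unfolding L_def by auto
  have sub2: "\<forall>S\<subseteq>I. (\<Sum>i\<in>S. lam i * b i) \<le> integral {0..sum lam S} \<gamma>2"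
  proof (intro allI impI)
    fix S assume S: "S \<subseteq> I"
    have e: "integral {0..sum lam S} \<gamma>2 = (if sum lam S \<le> l2 then Gp (sum lam S)
        else Gp l2 + exp (- l2) - exp (- min (sum lam S) l1))"
      using G2'(3) lamS[OF S] LS[OF S] by auto
    have gl: "Gp l2 + exp (- l2) = 1 + (1 - exp (- l2) * (1 + l2))" unfolding Gp_def by (simp add: algebra_simps)
    show "(\<Sum>i\<in>S. lam i * b i) \<le> integral {0..sum lam S} \<gamma>2"
    proof (cases "sum lam S \<le> l2")
      case True then show ?thesis using e PB S by auto
    next
      case False
      then show ?thesis using e gl PB2 S TB[OF S] XB by (cases "sum lam S \<le> l1") auto
    qed
  qed
  have eq2: "(\<Sum>i\<in>I. lam i * b i) = integral {0..sum lam I} \<gamma>2"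
  proof -
    have "integral {0..L} \<gamma>2 = Gp l2 + exp (- l2) - exp (- l1)" using G2'(3)[of L] l1L l lamS[of I] unfolding L_def by auto
    then show ?thesis using XB unfolding L_def Gp_def by (simp add: algebra_simps)
  qed
  have main: "integral {0..L} (\<lambda>t. integral {0..\<gamma>1 t} ?c) + integral {0..L} (\<lambda>t. integral {0..\<gamma>2 t} ?d)
     \<le> (\<Sum>i\<in>I. lam i * f (a i, b i))"
    unfolding L_def
    by (rule assemble[OF C CE(2) fin pos a01 b01 _ _ _ _ _ _ sub1 eq1 sub2 eq2])
       (use G1' G2' phic psic in \<open>auto simp: L_def\<close>)
  define F where "F = (\<lambda>t. f (\<gamma>1 t, \<gamma>2 t))"
  have pw: "F t = integral {0..\<gamma>1 t} ?c + integral {0..\<gamma>2 t} ?d" if t: "t \<in> {0..L}" for t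
  proof (cases "t \<le> l2")
    case True
    define y where "y = exp (- t)"
    have y: "x0 \<le> y" "y \<le> 1" "0 < y" unfolding y_def x0_def using True t by auto
    have hy: "h2 x0 y = Hf y" using y unfolding h2_def by auto
    have "\<gamma>1 t = y" "\<gamma>2 t = Hf y" using True l unfolding \<gamma>1_def \<gamma>2_def y_def by (auto simp: Hf_exp)
    then show ?thesis using CE(2)[of y] y hy unfolding F_def by auto
  next
    case False
    show ?thesis
    proof (cases "t \<le> l1")
      case True
      define y where "y = exp (- t)"
      have y: "y \<le> x0" "0 \<le> y" unfolding y_def x0_def using False by auto
      have "\<gamma>1 t = y" "\<gamma>2 t = y" using True False unfolding \<gamma>1_def \<gamma>2_def y_def by auto
      then show ?thesis using CE(1)[of y] y unfolding F_def by auto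
    next
      case False2: False
      have "f (0, 0) = integral {0..0} ?c + integral {0..0} ?d" using CE(1)[of 0] x0 by auto
      then show ?thesis using False False2 l unfolding F_def \<gamma>1_def \<gamma>2_def by auto
    qed
  qed
  have i1: "(\<lambda>t. integral {0..\<gamma>1 t} ?c) integrable_on {0..L}" using G1'(4)[OF phic] .
  have i2: "(\<lambda>t. integral {0..\<gamma>2 t} ?d) integrable_on {0..L}" using G2'(4)[OF psic] .
  have sumF: "integral {0..L} (\<lambda>t. integral {0..\<gamma>1 t} ?c) + integral {0..L} (\<lambda>t. integral {0..\<gamma>2 t} ?d)
      = integral {0..L} F"
  proof -
    have "integral {0..L} (\<lambda>t. integral {0..\<gamma>1 t} ?c + integral {0..\<gamma>2 t} ?d) = integral {0..L} F"
      by (rule integral_cong) (use pw in simp)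
    then show ?thesis using integral_add[OF i1 i2] by simp
  qed
  have iF: "F integrable_on {0..L}"
  proof (rule integrable_eq[OF Henstock_Kurzweil_Integration.integrable_add[OF i1 i2]])
    fix t assume "t \<in> {0..L}" then show "integral {0..\<gamma>1 t} ?c + integral {0..\<gamma>2 t} ?d = F t" using pw by simp
  qed
  have iF2: "F integrable_on {0..l1}" by (rule integrable_subinterval_real[OF iF]) (use l1L in auto)
  have spl: "integral {0..L} F = integral {0..l2} F + integral {l2..l1} F + integral {l1..L} F"
    using Henstock_Kurzweil_Integration.integral_combine[OF _ l1L iF]
      Henstock_Kurzweil_Integration.integral_combine[OF _ _ iF2, of l2] l by auto
  have p1: "integral {0..l2} F = integral {0..l2} (\<lambda>l. f (exp (-l), exp (-l) * (1 + l)))"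
    by (rule integral_cong) (use l in \<open>auto simp: F_def \<gamma>1_def \<gamma>2_def\<close>)
  have p2: "integral {l2..l1} F = integral {l2..l1} (\<lambda>l. f (exp (-l), exp (-l)))"
    by (rule pw_integral) (auto simp: F_def \<gamma>1_def \<gamma>2_def)
  have p3: "integral {l1..L} F = integral {l1..L} (\<lambda>_. 0)"
    by (rule pw_integral) (use l f00 in \<open>auto simp: F_def \<gamma>1_def \<gamma>2_def\<close>)
  show ?thesis using main sumF spl p1 p2 p3 by simp
qed

end

theorem mainTheorem10:
  fixes I :: "'i set" and J :: "'j set" and E :: "('i \<times> 'j) set"
    and lam :: "'i \<Rightarrow> real" and x :: "'i \<Rightarrow> 'j \<Rightarrow> real"
    and f :: "real \<times> real \<Rightarrow> real"
    and j1 j2 :: 'j and l1 l2 :: real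
  assumes "finite I" and "finite J" and "E \<subseteq> I \<times> J"
    and "\<forall>i\<in>I. lam i > 0"
    and "in_PM2_polytope I J E lam x"
    and "normalized f" and "dr_submodular f"
    and "j1 \<in> J" and "j2 \<in> J" and "j1 \<noteq> j2"
    and "l1 \<ge> 0" and "l2 \<ge> 0"
    and "(\<Sum>i\<in>I. x i j1) = 1 - poissonP 0 l1"
    and "(\<Sum>i\<in>I. x i j2) =
           (2 - poissonP 0 l2 - poissonP 1 l2) - (1 - poissonP 0 (min l1 l2))"
  shows "(l1 \<le> l2 \<longrightarrow>
           (\<Sum>i\<in>I. lam i * f (x i j1 / lam i, x i j1 / lam i + x i j2 / lam i))
             \<ge> integral {0..l1} (\<lambda>l. f (poissonP 0 l, poissonP 1 l))
               + integral {l1..l2} (\<lambda>l. f (0, poissonP 1 l)))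
       \<and> (l1 > l2 \<longrightarrow>
           (\<Sum>i\<in>I. lam i * f (x i j1 / lam i, x i j1 / lam i + x i j2 / lam i))
             \<ge> integral {0..l2} (\<lambda>l. f (poissonP 0 l, poissonP 1 l))
               + integral {l2..l1} (\<lambda>l. f (poissonP 0 l, poissonP 0 l)))"
proof -
  obtain f1 f2 f11 f12 f21 f22 :: "real \<times> real \<Rightarrow> real" where
    D: "\<forall>p\<in>{0..1::real} \<times> {0..1::real}.
         (f has_derivative (\<lambda>(h, k). f1 p * h + f2 p * k)) (at p within {0..1} \<times> {0..1}) \<and>
         (f1 has_derivative (\<lambda>(h, k). f11 p * h + f12 p * k)) (at p within {0..1} \<times> {0..1}) \<and>
         (f2 has_derivative (\<lambda>(h, k). f21 p * h + f22 p * k)) (at p within {0..1} \<times> {0..1}) \<and>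
         f11 p \<le> 0 \<and> f12 p \<le> 0 \<and> f21 p \<le> 0 \<and> f22 p \<le> 0"
    using assms(7) unfolding dr_submodular_def by blast
  have D1: "\<And>p. p \<in> sq \<Longrightarrow> (f has_derivative (\<lambda>(h, k). f1 p * h + f2 p * k)) (at p within sq) \<and>
         (f1 has_derivative (\<lambda>(h, k). f11 p * h + f12 p * k)) (at p within sq) \<and>
         (f2 has_derivative (\<lambda>(h, k). f21 p * h + f22 p * k)) (at p within sq) \<and>
         f11 p \<le> 0 \<and> f12 p \<le> 0 \<and> f21 p \<le> 0 \<and> f22 p \<le> 0"
    using D unfolding sq_def by blast
  interpret drf f f1 f2 f11 f12 f21 f22
    by unfold_locales (use D1 in blast)+
  have f00: "f (0, 0) = 0" using assms(6) unfolding normalized_def .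
  note P = assms(5)[unfolded in_PM2_polytope_def]
  have xnn: "\<forall>i\<in>I. \<forall>j\<in>J. x i j \<ge> 0" using P by (rule conjunct1)
  have row: "\<forall>i\<in>I. (\<Sum>j\<in>J. x i j) \<le> lam i" using P[THEN conjunct2, THEN conjunct2] by (rule conjunct1)
  have colS: "\<forall>S\<subseteq>I. \<forall>j\<in>J. (\<Sum>i\<in>S. x i j) \<le> 1 - poissonP 0 (\<Sum>i\<in>S. lam i)"
    using P[THEN conjunct2, THEN conjunct2, THEN conjunct2] by (rule conjunct1)
  have pairS: "\<forall>S\<subseteq>I. \<forall>j\<in>J. \<forall>j'\<in>J. j \<noteq> j' \<longrightarrow>
        (\<Sum>i\<in>S. x i j + x i j') \<le> (1 - poissonP 0 (\<Sum>i\<in>S. lam i)) + (1 - poissonP 1 (\<Sum>i\<in>S. lam i))"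
    using P[THEN conjunct2, THEN conjunct2, THEN conjunct2] by (rule conjunct2)
  define a where "a = (\<lambda>i. x i j1 / lam i)"
  define b where "b = (\<lambda>i. x i j1 / lam i + x i j2 / lam i)"
  have pos: "\<forall>i\<in>I. lam i > 0" using assms(4) .
  have ax: "lam i * a i = x i j1" if "i \<in> I" for i using pos that unfolding a_def by auto
  have bx: "lam i * b i = x i j1 + x i j2" if "i \<in> I" for i using pos that unfolding b_def by (auto simp: field_simps)
  have two: "x i j1 + x i j2 \<le> lam i" if i: "i \<in> I" for i
  proof -
    have "(\<Sum>j\<in>{j1,j2}. x i j) \<le> (\<Sum>j\<in>J. x i j)"
      by (rule sum_mono2) (use assms(2,8,9) xnn i in auto)
    then show ?thesis using row i assms(10) by auto
  qed
  have a01: "\<forall>i\<in>I. a i \<in> {0..1}"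
  proof
    fix i assume i: "i \<in> I"
    have "0 \<le> x i j1" "0 \<le> x i j2" using xnn i assms(8,9) by auto
    then show "a i \<in> {0..1}" using two[OF i] pos i unfolding a_def by (auto simp: field_simps)
  qed
  have b01: "\<forall>i\<in>I. b i \<in> {0..1}"
  proof
    fix i assume i: "i \<in> I"
    have "0 \<le> x i j1" "0 \<le> x i j2" using xnn i assms(8,9) by auto
    then show "b i \<in> {0..1}" using two[OF i] pos i unfolding b_def by (auto simp: field_simps)
  qed
  have sumA: "(\<Sum>i\<in>S. lam i * a i) = (\<Sum>i\<in>S. x i j1)" if "S \<subseteq> I" for S
    using ax that by (intro sum.cong) auto
  have sumB: "(\<Sum>i\<in>S. lam i * b i) = (\<Sum>i\<in>S. x i j1) + (\<Sum>i\<in>S. x i j2)" if "S \<subseteq> I" for S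
  proof -
    have "(\<Sum>i\<in>S. lam i * b i) = (\<Sum>i\<in>S. x i j1 + x i j2)" using bx that by (intro sum.cong) auto
    then show ?thesis by (simp add: sum.distrib)
  qed
  have PA: "\<forall>S\<subseteq>I. (\<Sum>i\<in>S. lam i * a i) \<le> 1 - exp (- sum lam S)"
    using colS assms(8) sumA by (auto simp: P0_eq)
  have XA: "(\<Sum>i\<in>I. lam i * a i) = 1 - exp (- l1)"
    using assms(13) sumA[of I] by (simp add: P0_eq)
  have PB: "\<forall>S\<subseteq>I. (\<Sum>i\<in>S. lam i * b i) \<le> Gp (sum lam S)"
  proof (intro allI impI)
    fix S assume S: "S \<subseteq> I"
    have "(\<Sum>i\<in>S. x i j1 + x i j2) \<le> (1 - exp (- sum lam S)) + (1 - exp (- sum lam S) * (1 + sum lam S))"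
      using pairS[unfolded P0_eq P1_eq] S assms(8,9,10) by auto
    then show "(\<Sum>i\<in>S. lam i * b i) \<le> Gp (sum lam S)"
      using sumB[OF S] by (simp add: Gp_def sum.distrib algebra_simps)
  qed
  have X2: "(\<Sum>i\<in>I. x i j2) = (2 - exp (- l2) - exp (- l2) * (1 + l2)) - (1 - exp (- min l1 l2))"
    using assms(14)[unfolded P0_eq P1_eq] by simp
  have LHS: "(\<Sum>i\<in>I. lam i * f (x i j1 / lam i, x i j1 / lam i + x i j2 / lam i)) = (\<Sum>i\<in>I. lam i * f (a i, b i))"
    unfolding a_def b_def ..
  show ?thesis
  proof (intro conjI impI)
    assume l12: "l1 \<le> l2"
    have XB: "(\<Sum>i\<in>I. lam i * b i) = Gp l2"
      using sumB[of I] XA sumA[of I] X2 l12 by (simp add: Gp_def min_def algebra_simps)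
    have "integral {0..l1} (\<lambda>l. f (exp (-l), exp (-l) * (1 + l))) + integral {l1..l2} (\<lambda>l. f (0, exp (-l) * (1 + l)))
     \<le> (\<Sum>i\<in>I. lam i * f (a i, b i))"
      by (rule case1_main[OF f00 assms(1) pos a01 b01 assms(11) l12 PA XA PB XB])
    then show "(\<Sum>i\<in>I. lam i * f (x i j1 / lam i, x i j1 / lam i + x i j2 / lam i))
             \<ge> integral {0..l1} (\<lambda>l. f (poissonP 0 l, poissonP 1 l))
               + integral {l1..l2} (\<lambda>l. f (0, poissonP 1 l))"
      unfolding LHS P0_eq P1_eq .
  next
    assume l21: "l1 > l2"
    have X2': "(\<Sum>i\<in>I. x i j2) = 1 - exp (- l2) * (1 + l2)" using X2 l21 by (simp add: min_def)
    have XB: "(\<Sum>i\<in>I. lam i * b i) = (1 - exp (- l1)) + (1 - exp (- l2) * (1 + l2))"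
      using sumB[of I] XA sumA[of I] X2' by simp
    have PB2: "\<forall>S\<subseteq>I. (\<Sum>i\<in>S. lam i * b i) \<le> (1 - exp (- sum lam S)) + (1 - exp (- l2) * (1 + l2))"
    proof (intro allI impI)
      fix S assume S: "S \<subseteq> I"
      have "(\<Sum>i\<in>S. x i j2) \<le> (\<Sum>i\<in>I. x i j2)"
        by (rule sum_mono2) (use assms(1,9) xnn S in auto)
      show "(\<Sum>i\<in>S. lam i * b i) \<le> (1 - exp (- sum lam S)) + (1 - exp (- l2) * (1 + l2))"
      proof -
        have "(\<Sum>i\<in>S. lam i * a i) \<le> 1 - exp (- sum lam S)" using PA S by blast
        then show ?thesis using \<open>(\<Sum>i\<in>S. x i j2) \<le> (\<Sum>i\<in>I. x i j2)\<close> sumB[OF S] sumA[OF S] X2' by linarith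
      qed
    qed
    have "integral {0..l2} (\<lambda>l. f (exp (-l), exp (-l) * (1 + l))) + integral {l2..l1} (\<lambda>l. f (exp (-l), exp (-l)))
     \<le> (\<Sum>i\<in>I. lam i * f (a i, b i))"
      by (rule case2_main[OF f00 assms(1) pos a01 b01 assms(12) l21 PA XA PB PB2 XB])
    then show "(\<Sum>i\<in>I. lam i * f (x i j1 / lam i, x i j1 / lam i + x i j2 / lam i))
             \<ge> integral {0..l2} (\<lambda>l. f (poissonP 0 l, poissonP 1 l))
               + integral {l2..l1} (\<lambda>l. f (poissonP 0 l, poissonP 0 l))"
      unfolding LHS P0_eq P1_eq .
  qed
qed


end
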